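(* Let $n\ge 1$. The inverses of the lower triangular matrices \[ \big(h_{2m-k}(\{1,q\}^{k-m+1})\big)_{0\leq k,m\leq n},\quad (c_{k,m}(q))_{1\leq k,m\leq n},\quad (g_{k,m}(q))_{1\leq k,m\leq n},\quad (d_{k,m}(q))_{1\leq k,m\leq n} \] (row index $k$, column index $m$) are, respectively, the lower triangular matrices whose $(k,m)$ entries for $k\ge m$ are \begin{align*} &(-1)^{k-m}\frac{[m]!}{[k+1]!}P_{k,k-m}(q) \quad (0\le m\le k\le n),\\ &(-1)^{k-m}\frac{(1-q)^{k-m+1}Q_{k,k-m}(q)}{\prod_{i=0}^{k-m}(1-q^{2k-2i+1})}\quad (1\le m\le k\le n),\\ &(-1)^{k-m}\frac{G_{k,k-m}(q)}{\prod_{i=0}^{k-m}(1+q^{k-i})}\quad (1\le m\le k\le n),\\ &(-1)^{k-m}\frac{H_{k,k-m}(q)}{(1+q)^{k-m+1}\prod_{i=0}^{k-m}(1+q^{2k-2i-1})}\quad (1\le m\le k\le n). \end{align*}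
   Context: $q$ is an indeterminate with square root $q^{1/2}$; $[k]=\frac{1-q^k}{1-q}$, $[k]!=\prod_{i=1}^k[i]$, $[0]!=1$. For integers $r,s\ge 0$, $h_n(\{1\}^r,\{x\}^s)$ is defined by $\sum_{n\geq0}h_n(\{1\}^r,\{x\}^s)z^n=\frac{1}{(1-z)^r(1-xz)^s}$ (so $h_n=0$ for $n<0$), with $h_n=0$ if $r<0$ or $s<0$; $h_n(\{1,x\}^r):=h_n(\{1\}^r,\{x\}^r)$. For integers $k,m$: $c_{k,m}(q)=h_{2m-k}(\{1,q^2\}^{k-m+1})+q\,h_{2m-k-1}(\{1,q^2\}^{k-m+1})$, $g_{k,m}(q)=h_{2m-k}(\{1\}^{k-m+1},\{q\}^{k-m})+h_{2m-k}(\{1\}^{k-m},\{q\}^{k-m+1})$, $d_{k,m}(q)=g_{k,m}(q^2)+q\,g_{k-1,m-1}(q^2)$. Let $S_{m,n}(q)=\sum_{k=1}^n\frac{[2k]}{[2]}[k]^{m-1}q^{\frac{m+1}{2}(n-k)}$ and $T_{m,n}(q)=\sum_{k=1}^n(-1)^{n-k}[k]^mq^{\frac m2(n-k)}$. The polynomials $P_{m,j},Q_{m,j},G_{m,j},H_{m,j}\in\mathbb{Z}[q]$ are those (shown to exist by Guo and Zeng, and uniquely determined) such that for all $n\ge1$: $S_{2m+1,n}(q)=\sum_{k=0}^m(-q^n)^{m-k}\frac{[k]!}{[m+1]!}P_{m,m-k}(q)\frac{([n][n+1])^{k+1}}{[2]}$ for $m\ge0$; $S_{2m,n}(q)=(1-q^{n+\frac12})\sum_{k=0}^m(-q^n)^{m-k}\frac{(1-q^{\frac12})^{m-k}Q_{m,m-k}(q^{\frac12})}{\prod_{i=0}^{m-k}(1-q^{m-i+\frac12})}\frac{([n][n+1])^k}{[2]}$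 for $m\ge1$; $T_{2m,n}(q)=\sum_{k=1}^m(-q^n)^{m-k}\frac{G_{m,m-k}(q)}{\prod_{i=0}^{m-k}(1+q^{m-i})}([n][n+1])^k$ for $m\ge1$; $T_{2m-1,n}(q)=(-1)^{m+n}H_{m,m-1}(q^{\frac12})\frac{q^{(m-\frac12)n}}{(1+q^{\frac12})^m\prod_{i=0}^{m-1}(1+q^{m-i-\frac12})}+\frac{1-q^{n+\frac12}}{1-q^{\frac12}}\sum_{k=1}^m(-q^n)^{m-k}\frac{H_{m,m-k}(q^{\frac12})([n][n+1])^{k-1}}{(1+q^{\frac12})^{m-k+1}\prod_{i=0}^{m-k}(1+q^{m-i-\frac12})}$ for $m\ge1$. *)

theory Defs
  imports "HOL-Computational_Algebra.Computational_Algebra"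
begin

definition qint :: "real \<Rightarrow> nat \<Rightarrow> real" where
  "qint q k = (1 - q ^ k) / (1 - q)"

definition qfact :: "real \<Rightarrow> nat \<Rightarrow> real" where
  "qfact q k = (\<Prod>i=1..k. qint q i)"

(* h_n({1}^r,{x}^s): coefficient of z^n in 1/((1-z)^r (1-xz)^s); zero if n,r or s negative *)
definition hh :: "int \<Rightarrow> int \<Rightarrow> int \<Rightarrow> real \<Rightarrow> real" where
  "hh n r s x = (if n < 0 \<or> r < 0 \<or> s < 0 then 0
     else fps_nth (inverse ((1 - fps_X) ^ nat r * (1 - fps_const x * fps_X) ^ nat s)) (nat n))"

definition hsym :: "int \<Rightarrow> int \<Rightarrow> real \<Rightarrow> real" where
  "hsym n r x = hh n r r x"

definition cpol :: "int \<Rightarrow> int \<Rightarrow> real \<Rightarrow> real" where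
  "cpol k m q = hsym (2*m - k) (k - m + 1) (q^2) + q * hsym (2*m - k - 1) (k - m + 1) (q^2)"

definition gpol :: "int \<Rightarrow> int \<Rightarrow> real \<Rightarrow> real" where
  "gpol k m q = hh (2*m - k) (k - m + 1) (k - m) q + hh (2*m - k) (k - m) (k - m + 1) q"

definition dpol :: "int \<Rightarrow> int \<Rightarrow> real \<Rightarrow> real" where
  "dpol k m q = gpol k m (q^2) + q * gpol (k - 1) (m - 1) (q^2)"

(* S_{m,n}(q) and T_{m,n}(q); q^(a/2) is written sqrt q ^ a *)
definition Ssum :: "nat \<Rightarrow> nat \<Rightarrow> real \<Rightarrow> real" where
  "Ssum m n q = (\<Sum>k=1..n. qint q (2*k) / qint q 2 * qint q k ^ (m - 1)
                          * sqrt q ^ ((m + 1) * (n - k)))"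

definition Tsum :: "nat \<Rightarrow> nat \<Rightarrow> real \<Rightarrow> real" where
  "Tsum m n q = (\<Sum>k=1..n. (-1) ^ (n - k) * qint q k ^ m * sqrt q ^ (m * (n - k)))"

definition evp :: "int poly \<Rightarrow> real \<Rightarrow> real" where
  "evp p x = poly (map_poly real_of_int p) x"

(* The polynomial families P_{m,j}, Q_{m,j}, G_{m,j}, H_{m,j}, defined (as in the paper) as the
   unique integer polynomials making the stated identities hold for all n \<ge> 1
   (the identities being read as identities of functions of q > 0, q \<noteq> 1). *)
definition Pfam :: "nat \<Rightarrow> nat \<Rightarrow> int poly" where
  "Pfam m = (THE f. (\<forall>j>m. f j = 0) \<and>
     (\<forall>n\<ge>1. \<forall>q::real. 0 < q \<and> q \<noteq> 1 \<longrightarrow>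
        Ssum (2*m+1) n q = (\<Sum>k=0..m. (- (q ^ n)) ^ (m - k) * qfact q k / qfact q (m+1)
            * evp (f (m - k)) q * (qint q n * qint q (n+1)) ^ (k+1) / qint q 2)))"

definition Qfam :: "nat \<Rightarrow> nat \<Rightarrow> int poly" where
  "Qfam m = (THE f. (\<forall>j>m. f j = 0) \<and>
     (\<forall>n\<ge>1. \<forall>q::real. 0 < q \<and> q \<noteq> 1 \<longrightarrow>
        Ssum (2*m) n q = (1 - sqrt q ^ (2*n+1)) *
          (\<Sum>k=0..m. (- (q ^ n)) ^ (m - k) * (1 - sqrt q) ^ (m - k) * evp (f (m - k)) (sqrt q)
             / (\<Prod>i=0..m-k. 1 - sqrt q ^ (2*(m-i)+1))
             * (qint q n * qint q (n+1)) ^ k / qint q 2)))"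

definition Gfam :: "nat \<Rightarrow> nat \<Rightarrow> int poly" where
  "Gfam m = (THE f. (\<forall>j\<ge>m. f j = 0) \<and>
     (\<forall>n\<ge>1. \<forall>q::real. 0 < q \<and> q \<noteq> 1 \<longrightarrow>
        Tsum (2*m) n q = (\<Sum>k=1..m. (- (q ^ n)) ^ (m - k) * evp (f (m - k)) q
             / (\<Prod>i=0..m-k. 1 + q ^ (m-i)) * (qint q n * qint q (n+1)) ^ k)))"

definition Hfam :: "nat \<Rightarrow> nat \<Rightarrow> int poly" where
  "Hfam m = (THE f. (\<forall>j\<ge>m. f j = 0) \<and>
     (\<forall>n\<ge>1. \<forall>q::real. 0 < q \<and> q \<noteq> 1 \<longrightarrow>
        Tsum (2*m-1) n q =
          (-1) ^ (m + n) * evp (f (m - 1)) (sqrt q) * sqrt q ^ ((2*m-1)*n)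
            / ((1 + sqrt q) ^ m * (\<Prod>i=0..m-1. 1 + sqrt q ^ (2*(m-i)-1)))
          + (1 - sqrt q ^ (2*n+1)) / (1 - sqrt q) *
            (\<Sum>k=1..m. (- (q ^ n)) ^ (m - k) * evp (f (m - k)) (sqrt q)
               * (qint q n * qint q (n+1)) ^ (k - 1)
               / ((1 + sqrt q) ^ (m - k + 1) * (\<Prod>i=0..m-k. 1 + sqrt q ^ (2*(m-i)-1))))))"

definition Ppol :: "nat \<Rightarrow> nat \<Rightarrow> int poly" where "Ppol m j = Pfam m j"
definition Qpol :: "nat \<Rightarrow> nat \<Rightarrow> int poly" where "Qpol m j = Qfam m j"
definition Gpol :: "nat \<Rightarrow> nat \<Rightarrow> int poly" where "Gpol m j = Gfam m j"
definition Hpol :: "nat \<Rightarrow> nat \<Rightarrow> int poly" where "Hpol m j = Hfam m j"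

definition inverse_on :: "nat \<Rightarrow> nat \<Rightarrow> (nat \<Rightarrow> nat \<Rightarrow> real) \<Rightarrow> (nat \<Rightarrow> nat \<Rightarrow> real) \<Rightarrow> bool" where
  "inverse_on lo hi A B \<longleftrightarrow>
     (\<forall>k\<in>{lo..hi}. \<forall>m\<in>{lo..hi}.
        (\<Sum>j=lo..hi. A k j * B j m) = (if k = m then 1 else 0) \<and>
        (\<Sum>j=lo..hi. B k j * A j m) = (if k = m then 1 else 0))"

end

theory Submission
  imports Defs
begin

definition EE :: "nat \<Rightarrow> nat \<Rightarrow> real \<Rightarrow> real fps" where
  "EE r s x = inverse ((1 - fps_X) ^ r * (1 - fps_const x * fps_X) ^ s)"

lemma hh_EE: "hh n r s x = (if n < 0 \<or> r < 0 \<or> s < 0 then 0 else EE (nat r) (nat s) x $ nat n)"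
  by (simp add: hh_def EE_def)

lemma EE_Suc_r: "(1 - fps_X) * EE (Suc r) s x = EE r s x"
proof -
  have "EE (Suc r) s x = inverse (1 - fps_X) * EE r s x"
    by (simp add: EE_def fps_inverse_mult mult.assoc)
  moreover have "(1 - fps_X) * inverse (1 - fps_X) = (1::real fps)"
    by (simp add: inverse_mult_eq_1')
  ultimately show ?thesis by (metis mult.assoc mult_1)
qed

lemma EE_Suc_s: "(1 - fps_const x * fps_X) * EE r (Suc s) x = EE r s x"
proof -
  have "EE r (Suc s) x = inverse (1 - fps_const x * fps_X) * EE r s x"
    by (simp add: EE_def fps_inverse_mult mult.assoc mult.left_commute)
  moreover have "(1 - fps_const x * fps_X) * inverse (1 - fps_const x * fps_X) = (1::real fps)"
    by (simp add: inverse_mult_eq_1')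
  ultimately show ?thesis by (metis mult.assoc mult_1)
qed

lemma EE_00: "EE 0 0 x = 1" by (simp add: EE_def)

lemma nth_1mX: "((1 - fps_X) * (G::real fps)) $ n = G $ n - (if n = 0 then 0 else G $ (n - 1))"
proof -
  have "(1 - fps_X) * G = G - fps_X * G" by (simp add: algebra_simps)
  then show ?thesis by (simp only: fps_sub_nth fps_X_mult_nth)
qed

lemma nth_1mcX: "((1 - fps_const x * fps_X) * (G::real fps)) $ n = G $ n - x * (if n = 0 then 0 else G $ (n - 1))"
proof -
  have "(1 - fps_const x * fps_X) * G = G - fps_const x * (fps_X * G)" by (simp add: algebra_simps)
  then show ?thesis by (simp only: fps_sub_nth fps_X_mult_nth fps_mult_left_const_nth)
qed

lemma hh_R1:
  assumes "r \<ge> 1"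
  shows "hh n r s x - hh (n - 1) r s x = hh n (r - 1) s x"
proof (cases "s < 0 \<or> n < 0")
  case True then show ?thesis by (auto simp: hh_def)
next
  case False
  then have s: "s \<ge> 0" and n: "n \<ge> 0" by auto
  define r' where "r' = nat (r - 1)"
  have r': "nat r = Suc r'" "nat (r - 1) = r'" using assms unfolding r'_def by auto
  have eq: "((1 - fps_X) * EE (Suc r') (nat s) x) $ nat n = EE r' (nat s) x $ nat n"
    by (simp add: EE_Suc_r)
  show ?thesis
  proof (cases "n = 0")
    case True
    then show ?thesis using eq s assms r' by (simp add: hh_EE nth_1mX)
  next
    case False
    then have "nat (n - 1) = nat n - 1" "nat n \<noteq> 0" using n by auto
    then show ?thesis using eq s assms r' n False by (simp add: hh_EE nth_1mX)
  qed
qed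

lemma hh_R2:
  assumes "s \<ge> 1"
  shows "hh n r s x - x * hh (n - 1) r s x = hh n r (s - 1) x"
proof (cases "r < 0 \<or> n < 0")
  case True then show ?thesis by (auto simp: hh_def)
next
  case False
  then have r: "r \<ge> 0" and n: "n \<ge> 0" by auto
  define s' where "s' = nat (s - 1)"
  have s': "nat s = Suc s'" "nat (s - 1) = s'" using assms unfolding s'_def by auto
  have eq: "((1 - fps_const x * fps_X) * EE (nat r) (Suc s') x) $ nat n = EE (nat r) s' x $ nat n"
    by (simp add: EE_Suc_s)
  show ?thesis
  proof (cases "n = 0")
    case True
    then show ?thesis using eq r assms s' by (simp add: hh_EE nth_1mcX)
  next
    case False
    then have "nat (n - 1) = nat n - 1" "nat n \<noteq> 0" using n by auto
    then show ?thesis using eq r assms s' n False by (simp add: hh_EE nth_1mcX)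
  qed
qed

lemma hh_00: "hh n 0 0 x = (if n = 0 then 1 else 0)"
  by (auto simp: hh_EE EE_00)

lemma hh_neg: "n < 0 \<or> r < 0 \<or> s < 0 \<Longrightarrow> hh n r s x = 0"
  by (simp add: hh_def)

lemma hh_R12:
  assumes "r \<ge> 1" "s \<ge> 1"
  shows "hh n r s x - (1 + x) * hh (n - 1) r s x + x * hh (n - 2) r s x = hh n (r - 1) (s - 1) x"
proof -
  have a: "hh n r s x - hh (n - 1) r s x = hh n (r - 1) s x" using hh_R1[OF assms(1)] .
  have b: "hh (n-1) r s x - hh (n - 1 - 1) r s x = hh (n-1) (r - 1) s x" using hh_R1[OF assms(1)] .
  have c: "hh n (r-1) s x - x * hh (n - 1) (r-1) s x = hh n (r-1) (s - 1) x" using hh_R2[OF assms(2)] .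
  have "n - 1 - 1 = n - 2" by simp
  then show ?thesis using a b c by (simp add: algebra_simps)
qed


lemma mp_add: "map_poly (of_int :: int \<Rightarrow> real) (p + q) = map_poly of_int p + map_poly of_int q"
  by (rule poly_eqI) (simp add: coeff_map_poly)
lemma mp_mult: "map_poly (of_int :: int \<Rightarrow> real) (p * q) = map_poly of_int p * map_poly of_int q"
  by (rule poly_eqI) (simp add: coeff_map_poly coeff_mult)
lemma mp_minus: "map_poly (of_int :: int \<Rightarrow> real) (- p) = - map_poly of_int p"
  by (rule poly_eqI) (simp add: coeff_map_poly)

lemma evp_add [simp]: "evp (p + q) x = evp p x + evp q x" by (simp add: evp_def mp_add)
lemma evp_mult [simp]: "evp (p * q) x = evp p x * evp q x" by (simp add: evp_def mp_mult)
lemma evp_minus [simp]: "evp (- p) x = - evp p x" by (simp add: evp_def mp_minus)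
lemma evp_diff [simp]: "evp (p - q) x = evp p x - evp q x"
  using evp_add[of p "-q" x] by simp
lemma evp_0 [simp]: "evp 0 x = 0" by (simp add: evp_def)
lemma evp_1 [simp]: "evp 1 x = 1" by (simp add: evp_def)
lemma evp_X [simp]: "evp [:0,1:] x = x" by (simp add: evp_def map_poly_pCons)
lemma evp_const [simp]: "evp [:c:] x = of_int c" by (simp add: evp_def map_poly_pCons)
lemma evp_of_int [simp]: "evp (of_int c) x = of_int c" by (simp add: of_int_poly)
lemma evp_of_nat [simp]: "evp (of_nat c) x = of_nat c"
  using evp_of_int[of "int c" x] by simp
lemma evp_sum: "evp (sum f A) x = (\<Sum>a\<in>A. evp (f a) x)"
  by (induction A rule: infinite_finite_induct) auto
lemma evp_prod: "evp (prod f A) x = (\<Prod>a\<in>A. evp (f a) x)"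
  by (induction A rule: infinite_finite_induct) auto
lemma evp_power [simp]: "evp (p ^ k) x = evp p x ^ k"
  by (induction k) auto
lemma evp_numeral [simp]: "evp (numeral k) x = numeral k"
  using evp_of_nat[of "numeral k" x] by simp

lemma evp_inj:
  assumes "infinite A" "\<And>x. x \<in> A \<Longrightarrow> evp p x = evp r x"
  shows "p = r"
proof -
  let ?d = "map_poly (of_int :: int \<Rightarrow> real) (p - r)"
  have "A \<subseteq> {x. poly ?d x = 0}"
  proof
    fix x assume "x \<in> A"
    then have "evp (p - r) x = 0" using assms(2) by simp
    then show "x \<in> {x. poly ?d x = 0}" by (simp add: evp_def)
  qed
  then have "infinite {x. poly ?d x = 0}" using assms(1) finite_subset by blast
  then have "?d = 0" using poly_roots_finite by blast
  then have "p - r = 0" by (simp add: map_poly_eq_0_iff)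
  then show ?thesis by simp
qed

fun hn :: "int poly \<Rightarrow> nat \<Rightarrow> nat \<Rightarrow> nat \<Rightarrow> int poly" where
  "hn X n 0 0 = (if n = 0 then 1 else 0)"
| "hn X n (Suc r) s = (if n = 0 then hn X 0 r s else hn X (n - 1) (Suc r) s + hn X n r s)"
| "hn X n 0 (Suc s) = (if n = 0 then hn X 0 0 s else X * hn X (n - 1) 0 (Suc s) + hn X n 0 s)"

lemma hh_R1': "r \<ge> 1 \<Longrightarrow> hh n r s x = hh (n - 1) r s x + hh n (r - 1) s x"
  using hh_R1[of r n s x] by simp
lemma hh_R2': "s \<ge> 1 \<Longrightarrow> hh n r s x = x * hh (n - 1) r s x + hh n r (s - 1) x"
  using hh_R2[of s n r x] by simp

lemma evp_hn: "evp (hn X n r s) t = hh (int n) (int r) (int s) (evp X t)"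
proof (induction X n r s rule: hn.induct)
  case (1 X n)
  then show ?case by (simp add: hh_00)
next
  case (2 X n r s)
  show ?case
  proof (cases "n = 0")
    case True
    then show ?thesis using 2 hh_R1'[of "int (Suc r)" 0 "int s" "evp X t"] by (simp add: hh_neg)
  next
    case False
    then show ?thesis using 2 hh_R1'[of "int (Suc r)" "int n" "int s" "evp X t"] by (simp add: of_nat_diff)
  qed
next
  case (3 X n s)
  show ?case
  proof (cases "n = 0")
    case True
    then show ?thesis using 3 hh_R2'[of "int (Suc s)" 0 0 "evp X t"] by (simp add: hh_neg)
  next
    case False
    then show ?thesis using 3 hh_R2'[of "int (Suc s)" "int n" 0 "evp X t"] by (simp add: of_nat_diff)
  qed
qed

definition hP :: "int poly \<Rightarrow> int \<Rightarrow> int \<Rightarrow> int \<Rightarrow> int poly" where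
  "hP X n r s = (if n < 0 \<or> r < 0 \<or> s < 0 then 0 else hn X (nat n) (nat r) (nat s))"

lemma evp_hP: "evp (hP X n r s) t = hh n r s (evp X t)"
  by (auto simp: hP_def evp_hn hh_neg)


function trinv :: "(nat \<Rightarrow> nat \<Rightarrow> 'a::comm_ring_1) \<Rightarrow> nat \<Rightarrow> nat \<Rightarrow> 'a" where
  "trinv A k m = (if k \<le> m then 1 else
     - (\<Sum>j\<in>{m..<k}. A k j * trinv A j m * (\<Prod>i\<in>{j<..<k}. A i i)))"
  by auto
termination by (relation "measure (\<lambda>(A,k,m). k - m)") auto

declare trinv.simps [simp del]

lemma evp_trinv: "evp (trinv A k m) x = trinv (\<lambda>i j. evp (A i j) x) k m"
proof (induction A k m rule: trinv.induct)
  case (1 A k m)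
  show ?case
  proof (cases "k \<le> m")
    case True then show ?thesis by (simp add: trinv.simps[of A k m] trinv.simps[of _ k m])
  next
    case False
    then show ?thesis
      apply (simp add: trinv.simps[of A k m] trinv.simps[of "\<lambda>i j. evp (A i j) x" k m] evp_sum evp_prod)
      apply (rule sum.cong, simp)
      using 1 False by simp
  qed
qed

definition Dg :: "(nat \<Rightarrow> nat \<Rightarrow> real) \<Rightarrow> nat \<Rightarrow> nat \<Rightarrow> real" where
  "Dg A m k = (\<Prod>i\<in>{m..k}. A i i)"

definition Bm :: "(nat \<Rightarrow> nat \<Rightarrow> real) \<Rightarrow> nat \<Rightarrow> nat \<Rightarrow> real" where
  "Bm A k m = (if m \<le> k then trinv A k m / Dg A m k else 0)"

lemma Dg_split:
  assumes "m \<le> j" "j < k"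
  shows "Dg A m k = Dg A m j * (\<Prod>i\<in>{j<..<k}. A i i) * A k k"
proof -
  have "{m..k} = {m..j} \<union> ({j<..<k} \<union> {k})" using assms by auto
  moreover have "{m..j} \<inter> ({j<..<k} \<union> {k}) = {}" using assms by auto
  ultimately have "Dg A m k = Dg A m j * (\<Prod>i\<in>{j<..<k} \<union> {k}. A i i)"
    unfolding Dg_def by (simp add: prod.union_disjoint)
  also have "(\<Prod>i\<in>{j<..<k} \<union> {k}. A i i) = (\<Prod>i\<in>{j<..<k}. A i i) * A k k"
    by (simp add: prod.union_disjoint)
  finally show ?thesis by simp
qed

locale lowtri =
  fixes A :: "nat \<Rightarrow> nat \<Rightarrow> real" and lo hi :: nat
  assumes diag: "\<And>i. lo \<le> i \<Longrightarrow> i \<le> hi \<Longrightarrow> A i i \<noteq> 0"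
  and upper0: "\<And>i j. i < j \<Longrightarrow> A i j = 0"
begin

lemma Dg_nz: "lo \<le> m \<Longrightarrow> k \<le> hi \<Longrightarrow> Dg A m k \<noteq> 0"
  unfolding Dg_def using diag by (auto simp: prod_zero_iff)

lemma right_inv:
  assumes k: "k \<in> {lo..hi}" and m: "m \<in> {lo..hi}"
  shows "(\<Sum>j=lo..hi. A k j * Bm A j m) = (if k = m then 1 else 0)"
proof -
  have z: "A k j * Bm A j m = 0" if "j \<notin> {m..k}" for j
    using that upper0[of k j] by (auto simp: Bm_def)
  have "(\<Sum>j=lo..hi. A k j * Bm A j m) = (\<Sum>j\<in>{m..k}. A k j * Bm A j m)"
    using k m z by (intro sum.mono_neutral_right) auto
  also have "\<dots> = (if k = m then 1 else 0)"
  proof (cases "k < m")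
    case True then show ?thesis by simp
  next
    case False
    show ?thesis
    proof (cases "k = m")
      case True
      then show ?thesis using diag[of m] m by (simp add: Bm_def Dg_def trinv.simps)
    next
      case False
      with \<open>\<not> k < m\<close> have km: "m < k" by simp
      have "{m..k} = insert k {m..<k}" using km by auto
      then have "(\<Sum>j\<in>{m..k}. A k j * Bm A j m) = A k k * Bm A k m + (\<Sum>j\<in>{m..<k}. A k j * Bm A j m)"
        by simp
      also have "A k k * Bm A k m = - (\<Sum>j\<in>{m..<k}. A k j * Bm A j m)"
      proof -
        have "A k k * Bm A k m = A k k * trinv A k m / Dg A m k" using km by (simp add: Bm_def)
        also have "\<dots> = - (\<Sum>j\<in>{m..<k}. A k j * trinv A j m * (\<Prod>i\<in>{j<..<k}. A i i)) * A k k / Dg A m k"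
          using km by (simp add: trinv.simps[of A k m])
        also have "\<dots> = - (\<Sum>j\<in>{m..<k}. A k j * trinv A j m * (\<Prod>i\<in>{j<..<k}. A i i) * A k k / Dg A m k)"
          by (simp add: sum_distrib_right sum_divide_distrib)
        also have "\<dots> = - (\<Sum>j\<in>{m..<k}. A k j * Bm A j m)"
        proof -
          have "A k j * trinv A j m * (\<Prod>i\<in>{j<..<k}. A i i) * A k k / Dg A m k = A k j * Bm A j m"
            if "j \<in> {m..<k}" for j
          proof -
            have nz: "Dg A m j \<noteq> 0" "(\<Prod>i\<in>{j<..<k}. A i i) \<noteq> 0" "A k k \<noteq> 0"
              using that Dg_nz[of m j] m k diag by (auto simp: prod_zero_iff)
            show ?thesis using that nz Dg_split[of m j k A] by (simp add: Bm_def field_simps)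
          qed
          then show ?thesis by (intro arg_cong[where f=uminus] sum.cong) auto
        qed
        finally show ?thesis .
      qed
      finally show ?thesis using km by simp
    qed
  qed
  finally show ?thesis .
qed

lemma Bm_upper0: "i < j \<Longrightarrow> Bm A i j = 0" by (simp add: Bm_def)

lemma kill:
  assumes "\<And>k. k \<in> {lo..hi} \<Longrightarrow> (\<Sum>j=lo..hi. A k j * X j) = 0"
  shows "k \<in> {lo..hi} \<Longrightarrow> X k = 0"
proof (induction k rule: less_induct)
  case (less k)
  have "(\<Sum>j=lo..hi. A k j * X j) = (\<Sum>j\<in>{lo..k}. A k j * X j)"
    using less.prems upper0 by (intro sum.mono_neutral_right) auto
  also have "\<dots> = A k k * X k + (\<Sum>j\<in>{lo..<k}. A k j * X j)"
  proof -
    have "{lo..k} = insert k {lo..<k}" using less.prems by auto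
    then show ?thesis by simp
  qed
  also have "(\<Sum>j\<in>{lo..<k}. A k j * X j) = 0"
    using less.prems less.IH by (intro sum.neutral) auto
  finally have "A k k * X k = 0" using assms less.prems by simp
  then show ?case using diag less.prems by simp
qed

lemma left_inv:
  assumes k: "k \<in> {lo..hi}" and m: "m \<in> {lo..hi}"
  shows "(\<Sum>j=lo..hi. Bm A k j * A j m) = (if k = m then 1 else 0)"
proof -
  define X where "X i = (\<Sum>j=lo..hi. Bm A i j * A j m) - (if i = m then 1 else 0)" for i
  have "(\<Sum>j=lo..hi. A k' j * X j) = 0" if k': "k' \<in> {lo..hi}" for k'
  proof -
    have "(\<Sum>j=lo..hi. A k' j * (\<Sum>i=lo..hi. Bm A j i * A i m))
        = (\<Sum>i=lo..hi. (\<Sum>j=lo..hi. A k' j * Bm A j i) * A i m)"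
    proof -
      have "(\<Sum>j=lo..hi. A k' j * (\<Sum>i=lo..hi. Bm A j i * A i m))
          = (\<Sum>j=lo..hi. \<Sum>i=lo..hi. A k' j * Bm A j i * A i m)"
        by (simp add: sum_distrib_left mult.assoc)
      also have "\<dots> = (\<Sum>i=lo..hi. \<Sum>j=lo..hi. A k' j * Bm A j i * A i m)"
        by (rule sum.swap)
      also have "\<dots> = (\<Sum>i=lo..hi. (\<Sum>j=lo..hi. A k' j * Bm A j i) * A i m)"
        by (simp add: sum_distrib_right)
      finally show ?thesis .
    qed
    also have "\<dots> = (\<Sum>i=lo..hi. (if k' = i then 1 else 0) * A i m)"
      using k' right_inv by (intro sum.cong) auto
    also have "\<dots> = (\<Sum>i\<in>{lo..hi}. if i = k' then A k' m else 0)"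
      by (intro sum.cong) auto
    also have "\<dots> = A k' m" using k' by (simp add: sum.delta)
    finally have e: "(\<Sum>j=lo..hi. A k' j * (\<Sum>i=lo..hi. Bm A j i * A i m)) = A k' m" .
    have "(\<Sum>j=lo..hi. A k' j * X j) = (\<Sum>j=lo..hi. A k' j * (\<Sum>i=lo..hi. Bm A j i * A i m))
          - (\<Sum>j=lo..hi. A k' j * (if j = m then 1 else 0))"
      by (simp add: X_def right_diff_distrib sum_subtractf)
    also have "(\<Sum>j=lo..hi. A k' j * (if j = m then 1 else 0)) = A k' m"
    proof -
      have "(\<Sum>j=lo..hi. A k' j * (if j = m then 1 else 0)) = (\<Sum>j\<in>{lo..hi}. if j = m then A k' m else 0)"
        by (intro sum.cong) auto
      then show ?thesis using m by (simp add: sum.delta)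
    qed
    finally show ?thesis using e by simp
  qed
  then have "X k = 0" using kill k by blast
  then show ?thesis by (simp add: X_def)
qed

end

lemma hh_zero: "r \<ge> 0 \<Longrightarrow> s \<ge> 0 \<Longrightarrow> hh 0 r s x = 1"
  by (simp add: hh_EE EE_def fps_nth_power_0)

lemma hh_10_nat: "hh (int m) 1 0 x = 1"
proof (induction m)
  case 0 then show ?case by (simp add: hh_zero)
next
  case (Suc m)
  have "hh (int (Suc m)) 1 0 x = hh (int (Suc m) - 1) 1 0 x + hh (int (Suc m)) (1 - 1) 0 x"
    using hh_R1'[of 1 "int (Suc m)" 0 x] by simp
  also have "int (Suc m) - 1 = int m" by simp
  finally show ?case using Suc by (simp add: hh_00)
qed

lemma hh_10: "n \<ge> 0 \<Longrightarrow> hh n 1 0 x = 1"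
  using hh_10_nat[of "nat n" x] by simp

lemma hh_01_nat: "hh (int m) 0 1 x = x ^ m"
proof (induction m)
  case 0 then show ?case by (simp add: hh_zero)
next
  case (Suc m)
  have "hh (int (Suc m)) 0 1 x = x * hh (int (Suc m) - 1) 0 1 x + hh (int (Suc m)) 0 (1 - 1) x"
    using hh_R2'[of 1 "int (Suc m)" 0 x] by simp
  also have "int (Suc m) - 1 = int m" by simp
  finally show ?case using Suc by (simp add: hh_00)
qed

lemma hh_11_nat: "hh (int m) 1 1 x = (\<Sum>i\<le>m. x ^ i)"
proof (induction m)
  case 0 then show ?case by (simp add: hh_zero)
next
  case (Suc m)
  have "hh (int (Suc m)) 1 1 x = x * hh (int (Suc m) - 1) 1 1 x + hh (int (Suc m)) 1 (1 - 1) x"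
    using hh_R2'[of 1 "int (Suc m)" 1 x] by simp
  also have "int (Suc m) - 1 = int m" by simp
  finally have "hh (int (Suc m)) 1 1 x = 1 + (\<Sum>i\<le>m. x ^ Suc i)"
    using Suc hh_10_nat[of "Suc m" x] by (simp add: sum_distrib_left del: of_nat_Suc)
  also have "\<dots> = (\<Sum>i\<le>Suc m. x ^ i)" by (subst sum.atMost_Suc_shift) simp
  finally show ?case .
qed


definition polyc :: "(nat \<Rightarrow> nat \<Rightarrow> real) \<Rightarrow> nat \<Rightarrow> real poly" where
  "polyc \<Gamma> k = (\<Sum>j\<le>k. monom (\<Gamma> k j) j)"

lemma gen_rec:
  fixes \<Gamma> :: "nat \<Rightarrow> nat \<Rightarrow> real" and G :: "nat \<Rightarrow> real"
  assumes up: "\<And>k j. k < j \<Longrightarrow> \<Gamma> k j = 0"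
  and rec: "\<And>k j. 2 \<le> k \<Longrightarrow> \<Gamma> k j = a * (if 1 \<le> j then \<Gamma> (k-1) (j-1) else 0)
                 - b * (if 2 \<le> j then \<Gamma> (k-2) (j-2) else 0) + (if 1 \<le> j then \<Gamma> (k-2) (j-1) else 0)"
  and Grec: "\<And>k. 2 \<le> k \<Longrightarrow> G k = a * z * G (k-1) - (b * z^2 - z) * G (k-2)"
  and G0: "G 0 = \<Gamma> 0 0" and G1: "G 1 = \<Gamma> 1 0 + \<Gamma> 1 1 * z"
  shows "G k = (\<Sum>j\<le>k. \<Gamma> k j * z ^ j)"
proof -
  have cf: "coeff (polyc \<Gamma> k) i = \<Gamma> k i" for k i
  proof -
    have "coeff (polyc \<Gamma> k) i = (\<Sum>j\<le>k. if j = i then \<Gamma> k j else 0)"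
      by (simp add: polyc_def coeff_sum)
    also have "\<dots> = (if i \<le> k then \<Gamma> k i else 0)" by (simp add: sum.delta')
    also have "\<dots> = \<Gamma> k i" using up[of k i] by auto
    finally show ?thesis .
  qed
  have prec: "polyc \<Gamma> k = smult a (monom 1 1 * polyc \<Gamma> (k-1)) - smult b (monom 1 2 * polyc \<Gamma> (k-2))
      + monom 1 1 * polyc \<Gamma> (k-2)" if "2 \<le> k" for k
    by (rule poly_eqI) (simp add: cf coeff_monom_mult rec[OF that] not_less)
  have pv: "poly (polyc \<Gamma> k) z = (\<Sum>j\<le>k. \<Gamma> k j * z ^ j)" for k
    by (simp add: polyc_def poly_sum poly_monom)
  have "G k = poly (polyc \<Gamma> k) z"
  proof (induction k rule: less_induct)
    case (less k)
    show ?case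
    proof (cases "k < 2")
      case True
      then have "k = 0 \<or> k = 1" by auto
      then show ?thesis using G0 G1 pv by auto
    next
      case False
      then have k2: "2 \<le> k" by simp
      have "G k = a * z * poly (polyc \<Gamma> (k-1)) z - (b * z^2 - z) * poly (polyc \<Gamma> (k-2)) z"
        using Grec[OF k2] less.IH[of "k-1"] less.IH[of "k-2"] k2 by simp
      also have "\<dots> = poly (polyc \<Gamma> k) z"
        by (subst prec[OF k2]) (simp add: poly_monom algebra_simps power2_eq_square)
      finally show ?thesis .
    qed
  qed
  then show ?thesis using pv by simp
qed


definition AP :: "real \<Rightarrow> nat \<Rightarrow> nat \<Rightarrow> real" where
  "AP q k j = hsym (2 * int j - int k) (int k - int j + 1) q"

definition AG :: "real \<Rightarrow> nat \<Rightarrow> nat \<Rightarrow> real" where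
  "AG q k j = gpol (int k) (int j) q"

lemma APi_rec:
  fixes k j :: int
  assumes "k \<ge> 2"
  shows "hh (2*j-k) (k-j+1) (k-j+1) q = (1+q) * hh (2*j-k-1) (k-j+1) (k-j+1) q
     - q * hh (2*j-k-2) (k-j+1) (k-j+1) q + hh (2*j-k) (k-j) (k-j) q"
proof (cases "k - j + 1 \<ge> 1")
  case True
  have "hh (2*j-k) (k-j+1) (k-j+1) q - (1 + q) * hh (2*j-k - 1) (k-j+1) (k-j+1) q
        + q * hh (2*j-k - 2) (k-j+1) (k-j+1) q = hh (2*j-k) (k-j+1 - 1) (k-j+1 - 1) q"
    using hh_R12[OF True True] .
  then show ?thesis by simp
next
  case F1: False
  show ?thesis
  proof (cases "k - j + 1 = 0")
    case True
    then have "j = k + 1" by simp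
    then show ?thesis using assms by (simp add: hh_00 hh_neg)
  next
    case False
    with F1 show ?thesis by (simp add: hh_neg)
  qed
qed

lemma AP_rec:
  assumes "2 \<le> k"
  shows "AP q k j = (1+q) * (if 1 \<le> j then AP q (k-1) (j-1) else 0)
     - q * (if 2 \<le> j then AP q (k-2) (j-2) else 0) + (if 1 \<le> j then AP q (k-2) (j-1) else 0)"
proof -
  have k2: "int k \<ge> 2" using assms by simp
  have e: "AP q k j = (1+q) * hh (2*int j-int k-1) (int k-int j+1) (int k-int j+1) q
     - q * hh (2*int j-int k-2) (int k-int j+1) (int k-int j+1) q + hh (2*int j-int k) (int k-int j) (int k-int j) q"
    unfolding AP_def hsym_def using APi_rec[OF k2, of "int j" q] by simp
  show ?thesis
  proof (cases "j = 0")
    case True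
    then show ?thesis using e assms by (simp add: hh_neg)
  next
    case False
    show ?thesis
    proof (cases "j = 1")
      case True
      then show ?thesis using e assms
        by (simp add: hh_neg AP_def hsym_def of_nat_diff algebra_simps)
    next
      case False
      with \<open>j \<noteq> 0\<close> have "2 \<le> j" by simp
      then show ?thesis using e assms
        by (simp add: AP_def hsym_def of_nat_diff algebra_simps)
    qed
  qed
qed

lemma AP_up: "k < j \<Longrightarrow> AP q k j = 0"
  by (cases "j = k + 1") (auto simp: AP_def hsym_def hh_neg hh_00)

lemma hh_01: "n \<ge> 0 \<Longrightarrow> hh n 0 1 x = x ^ nat n"
  using hh_01_nat[of "nat n" x] by simp

definition gg :: "real \<Rightarrow> int \<Rightarrow> int \<Rightarrow> real" where
  "gg q d r = hh d r (r-1) q + hh d (r-1) r q"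

lemma gpol_gg: "gpol k m q = gg q (2*m-k) (k-m+1)"
  by (simp add: gpol_def gg_def)

lemma gg_rec:
  assumes "d \<ge> 2 \<or> r \<ge> 2"
  shows "gg q d r = (1+q) * gg q (d-1) r - q * gg q (d-2) r + gg q d (r-1)"
proof (cases "r \<ge> 2")
  case True
  have r1: "r \<ge> 1" "r - 1 \<ge> 1" using True by auto
  have a: "hh d r (r-1) q - (1 + q) * hh (d - 1) r (r-1) q + q * hh (d - 2) r (r-1) q = hh d (r - 1) (r - 1 - 1) q"
    using hh_R12[OF r1] .
  have b: "hh d (r-1) r q - (1 + q) * hh (d - 1) (r-1) r q + q * hh (d - 2) (r-1) r q = hh d (r - 1 - 1) (r - 1) q"
    using hh_R12[OF r1(2) r1(1)] .
  show ?thesis using a b by (simp add: gg_def algebra_simps)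
next
  case False
  then have d2: "d \<ge> 2" using assms by simp
  show ?thesis
  proof (cases "r = 1")
    case True
    obtain m where m: "d = int m + 2" using d2 by (metis add.commute le_add_diff_inverse nonneg_int_cases diff_ge_0_iff_ge)
    have "gg q d r = 1 + q ^ (m + 2)" using True m by (simp add: gg_def hh_10 hh_01 nat_add_distrib)
    moreover have "gg q (d-1) r = 1 + q ^ (m + 1)" using True m by (simp add: gg_def hh_10 hh_01 nat_add_distrib)
    moreover have "gg q (d-2) r = 1 + q ^ m" using True m by (simp add: gg_def hh_10 hh_01)
    moreover have "gg q d (r-1) = 0" using True by (simp add: gg_def hh_neg)
    ultimately show ?thesis by (simp add: algebra_simps)
  next
    case False
    then have "r \<le> 0" using \<open>\<not> r \<ge> 2\<close> by simp
    then show ?thesis by (simp add: gg_def hh_neg)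
  qed
qed

lemma AG_rec:
  assumes "2 \<le> k"
  shows "AG q k j = (1+q) * (if 1 \<le> j then AG q (k-1) (j-1) else 0)
     - q * (if 2 \<le> j then AG q (k-2) (j-2) else 0) + (if 1 \<le> j then AG q (k-2) (j-1) else 0)"
proof -
  have c: "2 * int j - int k \<ge> 2 \<or> int k - int j + 1 \<ge> 2 \<or> int k - int j + 1 \<le> 0"
    using assms by linarith
  have g0: "gg q d r = 0" if "d < 0" for d r using that by (simp add: gg_def hh_neg)
  have e: "AG q k j = (1+q) * gg q (2*int j-int k-1) (int k-int j+1)
     - q * gg q (2*int j-int k-2) (int k-int j+1) + gg q (2*int j-int k) (int k-int j)"
  proof (cases "int k - int j + 1 \<le> 0")
    case True
    then show ?thesis by (simp add: AG_def gpol_gg gg_def hh_neg)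
  next
    case False
    then have "2 * int j - int k \<ge> 2 \<or> int k - int j + 1 \<ge> 2" using c by simp
    from gg_rec[OF this, of q] show ?thesis by (simp add: AG_def gpol_gg)
  qed
  show ?thesis
  proof (cases "j = 0")
    case True
    then show ?thesis using e assms g0 by simp
  next
    case False
    show ?thesis
    proof (cases "j = 1")
      case True
      then show ?thesis using e assms g0
        by (simp add: AG_def gpol_gg of_nat_diff algebra_simps)
    next
      case False
      with \<open>j \<noteq> 0\<close> have "2 \<le> j" by simp
      then show ?thesis using e assms
        by (simp add: AG_def gpol_gg of_nat_diff algebra_simps)
    qed
  qed
qed

lemma AG_up: "k < j \<Longrightarrow> AG q k j = 0"
  by (simp add: AG_def gpol_gg gg_def hh_neg)


definition L :: "real \<Rightarrow> nat \<Rightarrow> real" where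
  "L s n = (s ^ n - 1 / s ^ n) / (s - 1 / s)"

fun hs :: "real \<Rightarrow> real \<Rightarrow> nat \<Rightarrow> real" where
  "hs a b 0 = 1"
| "hs a b (Suc k) = a * hs a b k + b ^ Suc k"

lemma hs_diff: "(a - b) * hs a b k = a ^ Suc k - b ^ Suc k"
proof (induction k)
  case 0 then show ?case by simp
next
  case (Suc k)
  have "(a - b) * hs a b (Suc k) = a * ((a - b) * hs a b k) + (a - b) * b ^ Suc k"
    by (simp add: algebra_simps)
  also have "\<dots> = a * (a ^ Suc k - b ^ Suc k) + (a - b) * b ^ Suc k" using Suc by simp
  also have "\<dots> = a ^ Suc (Suc k) - b ^ Suc (Suc k)" by (simp add: algebra_simps)
  finally show ?case .
qed

lemma hs_rec: "2 \<le> k \<Longrightarrow> hs a b k = (a + b) * hs a b (k - 1) - a * b * hs a b (k - 2)"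
proof -
  assume "2 \<le> k"
  then obtain p where p: "k = Suc (Suc p)" by (metis add_2_eq_Suc le_Suc_ex)
  show ?thesis unfolding p by (simp add: algebra_simps)
qed

locale sfix =
  fixes s :: real
  assumes spos: "s > 0" and sne1: "s \<noteq> 1"
begin

lemma s_ne: "s \<noteq> 0" "s - 1 / s \<noteq> 0" "s * s \<noteq> 1" "s ^ 2 \<noteq> 1"
proof -
  show "s \<noteq> 0" using spos by simp
  have "s * s \<noteq> 1"
  proof
    assume "s * s = 1"
    then have "(s - 1) * (s + 1) = 0" by (simp add: algebra_simps)
    then show False using spos sne1 by simp
  qed
  then show "s * s \<noteq> 1" .
  then show "s ^ 2 \<noteq> 1" by (simp add: power2_eq_square)
  show "s - 1 / s \<noteq> 0" using \<open>s * s \<noteq> 1\<close> spos by (simp add: field_simps)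
qed

lemma L0 [simp]: "L s 0 = 0" by (simp add: L_def)
lemma L1 [simp]: "L s 1 = 1" using s_ne by (simp add: L_def)

lemma Lt: "L s n = (s ^ n - (1/s) ^ n) / (s - 1/s)"
  by (simp add: L_def power_one_over)
lemma Lsx: "L s (Suc n) = (s * s ^ n - (1/s) * (1/s) ^ n) / (s - 1/s)"
  by (simp add: Lt)
lemma Lssx: "L s (Suc (Suc n)) = (s * s * s ^ n - (1/s) * (1/s) * (1/s) ^ n) / (s - 1/s)"
  by (simp add: Lt mult.assoc)
lemma L2sx: "L s (2 * Suc n) = ((s * s ^ n)^2 - ((1/s) * (1/s) ^ n)^2) / (s - 1/s)"
  by (simp add: Lt power_mult power2_eq_square mult_ac flip: power_mult_distrib)

lemma st1: "s * (1/s) = 1" "s ^ n * (1/s) ^ n = 1"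
  using s_ne by (auto simp flip: power_mult_distrib)

lemma Lvars:
  obtains t x y where "s * t = 1" "x * y = 1" "s - t \<noteq> 0"
    "L s n = (x - y) / (s - t)" "L s (Suc n) = (s * x - t * y) / (s - t)"
    "L s (Suc (Suc n)) = (s * s * x - t * t * y) / (s - t)"
    "L s (2 * Suc n) = ((s * x)^2 - (t * y)^2) / (s - t)"
proof -
  define t where "t = 1/s"
  define x where "x = s ^ n"
  define y where "y = t ^ n"
  show ?thesis
    apply (rule that[of t x y])
    using st1 s_ne unfolding t_def x_def y_def
    by (simp_all only: Lt[of n] Lsx Lssx L2sx) simp_all
qed

lemma Lrec: "L s (Suc (Suc n)) + L s n = (s + 1/s) * L s (Suc n)"
proof -
  obtain t x y where v: "s * t = 1" "x * y = 1" "s - t \<noteq> 0"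
    "L s n = (x - y) / (s - t)" "L s (Suc n) = (s * x - t * y) / (s - t)"
    "L s (Suc (Suc n)) = (s * s * x - t * t * y) / (s - t)" by (rule Lvars)
  have t: "t = 1/s" using v(1) s_ne by (simp add: field_simps)
  have g: "(s*s*x - t*t*y) + (x - y) = (s + t) * (s*x - t*y)"
    using v by algebra
  show ?thesis unfolding v(4-6) t[symmetric] using g v(3)
    by (simp add: add_divide_distrib[symmetric])
qed

lemma Lprod: "L s (Suc (Suc n)) * L s n = L s (Suc n) ^ 2 - 1"
proof -
  obtain t x y where v: "s * t = 1" "x * y = 1" "s - t \<noteq> 0"
    "L s n = (x - y) / (s - t)" "L s (Suc n) = (s * x - t * y) / (s - t)"
    "L s (Suc (Suc n)) = (s * s * x - t * t * y) / (s - t)" by (rule Lvars)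
  have g: "(s*s*x - t*t*y)*(x - y) = (s*x - t*y)^2 - (s-t)^2"
    using v by algebra
  have ab: "A * B = C^2 - D^2 \<Longrightarrow> D \<noteq> 0 \<Longrightarrow> (A/D) * (B/D) = (C/D)^2 - 1" for A B C D :: real
    by (simp add: field_simps power2_eq_square)
  show ?thesis unfolding v(4-6) using ab[OF g v(3)] .
qed

lemma Ldiff: "L s (Suc n) * (L s (Suc (Suc n)) - L s n) = L s (2 * Suc n)"
proof -
  obtain t x y where v: "s * t = 1" "x * y = 1" "s - t \<noteq> 0"
    "L s n = (x - y) / (s - t)" "L s (Suc n) = (s * x - t * y) / (s - t)"
    "L s (Suc (Suc n)) = (s * s * x - t * t * y) / (s - t)"
    "L s (2 * Suc n) = ((s * x)^2 - (t * y)^2) / (s - t)" by (rule Lvars)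
  have g: "(s*x - t*y)*((s*s*x - t*t*y) - (x - y)) = (s - t) * ((s*x)^2 - (t*y)^2)"
    using v by algebra
  have ab: "A * (B - C) = D * E \<Longrightarrow> D \<noteq> 0 \<Longrightarrow> (A/D) * (B/D - C/D) = E / D" for A B C D E :: real
    by (simp add: field_simps power2_eq_square)
  show ?thesis unfolding v(4-7) using ab[OF g v(3)] .
qed

end

definition V :: "real \<Rightarrow> nat \<Rightarrow> real" where "V s n = L s n * L s (Suc n)"
definition SP :: "real \<Rightarrow> nat \<Rightarrow> nat \<Rightarrow> real" where
  "SP s j n = (\<Sum>i=1..n. L s (2*i) * (L s i ^ 2 / s ^ 2) ^ j)"

context sfix begin

lemma P_core:
  "L s (Suc n) ^ k * hs (L s (Suc (Suc n))) (L s n) k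
     = s ^ k * (\<Sum>j\<le>k. AP (s^2) k j * (L s (Suc n) ^ 2 / s ^ 2) ^ j)"
proof -
  define a where "a = L s (Suc (Suc n))"
  define b where "b = L s n"
  define y where "y = L s (Suc n)"
  define G where "G k = y ^ k * hs a b k / s ^ k" for k
  define z where "z = y ^ 2 / s ^ 2"
  have ab1: "a + b = (s + 1/s) * y" unfolding a_def b_def y_def using Lrec .
  have ab2: "a * b = y ^ 2 - 1" unfolding a_def b_def y_def using Lprod .
  have sn: "s \<noteq> 0" using s_ne by simp
  have "G k = (\<Sum>j\<le>k. AP (s^2) k j * z ^ j)"
  proof (rule gen_rec[where a = "1 + s^2" and b = "s^2"])
    show "\<And>k j. k < j \<Longrightarrow> AP (s^2) k j = 0" by (rule AP_up)
    show "\<And>k j. 2 \<le> k \<Longrightarrow> AP (s^2) k j = (1 + s^2) * (if 1 \<le> j then AP (s^2) (k-1) (j-1) else 0)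
         - s^2 * (if 2 \<le> j then AP (s^2) (k-2) (j-2) else 0) + (if 1 \<le> j then AP (s^2) (k-2) (j-1) else 0)"
      by (rule AP_rec)
    show "G k = (1 + s^2) * z * G (k-1) - (s^2 * z^2 - z) * G (k-2)" if k2: "2 \<le> k" for k
    proof -
      obtain p where p: "k = Suc (Suc p)" using k2 by (metis add_2_eq_Suc le_Suc_ex)
      have h: "hs a b k = (s + 1/s) * y * hs a b (Suc p) - (y^2 - 1) * hs a b p"
        using hs_rec[OF k2, of a b] ab1 ab2 p by simp
      have gen: "(y*y*Y)*((s+1/s)*y*H1 - (y^2-1)*H0)/(s*s*S) = (1+s^2)*(y^2/s^2)*((y*Y)*H1/(s*S)) - (s^2*(y^2/s^2)^2 - y^2/s^2)*(Y*H0/S)"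
        if "S \<noteq> 0" for S Y H1 H0 using that sn by (simp add: field_simps power2_eq_square)
      have "G k = (y*y*y^p)*((s+1/s)*y*hs a b (Suc p) - (y^2-1)*hs a b p)/(s*s*s^p)"
        unfolding G_def h by (simp add: p)
      also have "\<dots> = (1+s^2)*(y^2/s^2)*((y*y^p)*hs a b (Suc p)/(s*s^p)) - (s^2*(y^2/s^2)^2 - y^2/s^2)*(y^p*hs a b p/s^p)"
        by (rule gen) (simp add: sn)
      also have "\<dots> = (1 + s^2) * z * G (k-1) - (s^2 * z^2 - z) * G (k-2)"
        unfolding G_def z_def p by simp
      finally show ?thesis .
    qed
    show "G 0 = AP (s^2) 0 0" by (simp add: G_def AP_def hsym_def hh_zero)
    show "G 1 = AP (s^2) 1 0 + AP (s^2) 1 1 * z"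
    proof -
      have "AP (s^2) 1 1 = 1 + s^2" using hh_11_nat[of 1 "s^2"] by (simp add: AP_def hsym_def)
      moreover have "AP (s^2) 1 0 = 0" by (simp add: AP_def hsym_def hh_neg)
      moreover have "G 1 = y * (a + b) / s" by (simp add: G_def)
      ultimately show ?thesis using ab1 sn unfolding z_def by (simp add: field_simps power2_eq_square)
    qed
  qed
  then show ?thesis using sn unfolding G_def z_def y_def a_def b_def by (simp add: field_simps)
qed

lemma P_tele:
  "V s (Suc n) ^ Suc k - V s n ^ Suc k
     = L s (2 * Suc n) * s ^ k * (\<Sum>j\<le>k. AP (s^2) k j * (L s (Suc n) ^ 2 / s ^ 2) ^ j)"
proof -
  define a where "a = L s (Suc (Suc n))"
  define b where "b = L s n"
  define y where "y = L s (Suc n)"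
  have "V s (Suc n) ^ Suc k - V s n ^ Suc k = y ^ Suc k * (a ^ Suc k - b ^ Suc k)"
    unfolding V_def a_def b_def y_def by (simp only: power_mult_distrib right_diff_distrib mult.commute)
  also have "\<dots> = y ^ Suc k * ((a - b) * hs a b k)" by (simp only: hs_diff)
  also have "\<dots> = (y * (a - b)) * (y ^ k * hs a b k)"
    by (simp only: power_Suc mult_ac)
  also have "y * (a - b) = L s (2 * Suc n)" unfolding y_def a_def b_def by (rule Ldiff)
  also have "y ^ k * hs a b k = s ^ k * (\<Sum>j\<le>k. AP (s^2) k j * (y ^ 2 / s ^ 2) ^ j)"
    unfolding y_def a_def b_def by (rule P_core)
  finally show ?thesis by (simp add: y_def mult.assoc)
qed

lemma P_sum: "V s n ^ Suc k = s ^ k * (\<Sum>j\<le>k. AP (s^2) k j * SP s j n)"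
proof (induction n)
  case 0
  then show ?case by (simp add: V_def SP_def)
next
  case (Suc n)
  have "V s (Suc n) ^ Suc k = V s n ^ Suc k + L s (2 * Suc n) * s ^ k * (\<Sum>j\<le>k. AP (s^2) k j * (L s (Suc n) ^ 2 / s ^ 2) ^ j)"
    using P_tele[of n k] by simp
  also have "\<dots> = s ^ k * (\<Sum>j\<le>k. AP (s^2) k j * SP s j (Suc n))"
    using Suc by (simp add: SP_def sum_distrib_left sum.distrib algebra_simps)
  finally show ?case .
qed

end

context sfix begin

lemma L_step: "L s (Suc n) = s * L s n + (1/s) ^ n" "L s (Suc n) = (1/s) * L s n + s ^ n"
proof -
  have g1: "(s*x - t*y)/(s - t) = s*((x-y)/(s - t)) + y" if "s - t \<noteq> 0" for t x y :: real
    using that by (simp add: field_simps)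
  have g2: "(s*x - t*y)/(s - t) = t*((x-y)/(s - t)) + x" if "s - t \<noteq> 0" for t x y :: real
    using that by (simp add: field_simps)
  show "L s (Suc n) = s * L s n + (1/s) ^ n" unfolding Lsx Lt[of n] using g1[OF s_ne(2)] .
  show "L s (Suc n) = (1/s) * L s n + s ^ n" unfolding Lsx Lt[of n] using g2[OF s_ne(2)] .
qed

lemma L1' [simp]: "L s (Suc 0) = 1" using L1 by simp

lemma L_mono: "0 \<le> L s n \<and> L s n < L s (Suc n)"
proof (induction n)
  case 0 then show ?case by simp
next
  case (Suc n)
  then have nn: "0 \<le> L s (Suc n)" by simp
  show ?case
  proof (cases "s > 1")
    case True
    have "L s (Suc (Suc n)) - L s (Suc n) = (s - 1) * L s (Suc n) + (1/s) ^ Suc n"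
      using L_step(1)[of "Suc n"] by (simp add: algebra_simps)
    moreover have "(s - 1) * L s (Suc n) \<ge> 0" using True nn by simp
    moreover have "(1/s) ^ Suc n > 0" using spos by simp
    ultimately show ?thesis using nn by linarith
  next
    case False
    then have "1/s > 1" using spos sne1 by (simp add: field_simps)
    have "L s (Suc (Suc n)) - L s (Suc n) = (1/s - 1) * L s (Suc n) + s ^ Suc n"
      using L_step(2)[of "Suc n"] by (simp add: algebra_simps)
    moreover have "(1/s - 1) * L s (Suc n) \<ge> 0" using \<open>1/s > 1\<close> nn by simp
    moreover have "s ^ Suc n > 0" using spos by simp
    ultimately show ?thesis using nn by linarith
  qed
qed

lemma L_pos: "1 \<le> n \<Longrightarrow> L s n > 0"
  using L_mono[of "n - 1"] L_mono[of n] by (cases n) auto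

lemma V_strict: "1 \<le> n \<Longrightarrow> V s n < V s (Suc n)"
proof -
  assume n: "1 \<le> n"
  have a: "0 < L s n" "L s n < L s (Suc n)" "L s (Suc n) < L s (Suc (Suc n))"
    using L_pos[OF n] L_mono[of n] L_mono[of "Suc n"] by auto
  then have "L s n * L s (Suc n) < L s (Suc n) * L s (Suc (Suc n))"
    by (intro mult_strict_mono) auto
  then show ?thesis by (simp add: V_def)
qed

lemma V_mono: "1 \<le> n \<Longrightarrow> n < m \<Longrightarrow> V s n < V s m"
proof (induction m)
  case 0 then show ?case by simp
next
  case (Suc m)
  show ?case
  proof (cases "n = m")
    case True then show ?thesis using V_strict Suc by simp
  next
    case False
    then have "V s n < V s m" using Suc by simp
    also have "V s m < V s (Suc m)" using V_strict Suc by simp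
    finally show ?thesis .
  qed
qed

lemma V_inf: "infinite (V s ` {1..})"
proof -
  have "inj_on (V s) {1..}"
  proof (rule inj_onI)
    fix x y assume "x \<in> {1..}" "y \<in> {1..}" "V s x = V s y"
    then show "x = y" using V_mono[of x y] V_mono[of y x] by (cases x y rule: linorder_cases) auto
  qed
  then show ?thesis using finite_imageD infinite_Ici by blast
qed

lemma uniq_V:
  assumes "\<And>n. 1 \<le> n \<Longrightarrow> (\<Sum>k\<le>m. d k * V s n ^ k) = 0" and "k \<le> m"
  shows "d k = 0"
proof -
  define p where "p = (\<Sum>k\<le>m. monom (d k) k)"
  have "V s ` {1..} \<subseteq> {x. poly p x = 0}"
    using assms(1) by (auto simp: p_def poly_sum poly_monom)
  then have "infinite {x. poly p x = 0}" using V_inf finite_subset by blast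
  then have "p = 0" using poly_roots_finite by blast
  then have "coeff p k = 0" by simp
  moreover have "coeff p k = d k" using assms(2) by (simp add: p_def coeff_sum)
  ultimately show ?thesis by simp
qed

lemma qL: "qint (s^2) j * s = s ^ j * L s j"
proof -
  have g: "(1 - x*x) / (1 - s*s) * s = x * ((x - 1/x) / (s - 1/s))" if "x \<noteq> 0" for x :: real
    using that s_ne by (simp add: field_simps)
  have x: "s ^ j \<noteq> 0" using s_ne by simp
  show ?thesis unfolding qint_def L_def using g[OF x]
    by (simp add: power_mult power2_eq_square flip: power_mult_distrib)
qed

end

lemma pow_ratio: "(s::real) \<noteq> 0 \<Longrightarrow> a + d = c + b \<Longrightarrow> s ^ a / s ^ b = s ^ c / s ^ d"
  by (simp add: field_simps power_add[symmetric])

lemma qint_sum: "q \<noteq> 1 \<Longrightarrow> qint q j = (\<Sum>l<j. q ^ l)"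
  by (simp add: qint_def geometric_sum field_simps)

lemma qint_pos: "0 < q \<Longrightarrow> q \<noteq> 1 \<Longrightarrow> 1 \<le> j \<Longrightarrow> qint q j > 0"
  by (simp add: qint_sum) (intro sum_pos, auto simp: lessThan_empty_iff)

lemma AP_diag: "q \<noteq> 1 \<Longrightarrow> AP q i i = qint q (Suc i)"
  using hh_11_nat[of i q] by (simp add: AP_def hsym_def sum_gp0 qint_def)

lemma qfact_split: "k \<le> m \<Longrightarrow> qfact q (Suc m) = qfact q k * (\<Prod>i\<in>{k..m}. qint q (Suc i))"
proof -
  assume km: "k \<le> m"
  have "{1..Suc m} = {1..k} \<union> {Suc k..Suc m}" using km by auto
  moreover have "{1..k} \<inter> {Suc k..Suc m} = {}" by auto
  ultimately have "qfact q (Suc m) = qfact q k * (\<Prod>i\<in>{Suc k..Suc m}. qint q i)"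
    unfolding qfact_def by (simp add: prod.union_disjoint)
  also have "(\<Prod>i\<in>{Suc k..Suc m}. qint q i) = (\<Prod>i\<in>{k..m}. qint q (Suc i))"
    by (rule prod.shift_bounds_cl_Suc_ivl)
  finally show ?thesis .
qed

lemma qfact_pos: "0 < q \<Longrightarrow> q \<noteq> 1 \<Longrightarrow> qfact q k > 0"
  unfolding qfact_def by (rule prod_pos) (auto intro: qint_pos)

lemma lowtri_AP: "0 < q \<Longrightarrow> q \<noteq> 1 \<Longrightarrow> lowtri (AP q) lo hi"
proof
  fix i assume "0 < q" "q \<noteq> 1"
  then show "AP q i i \<noteq> 0" using qint_pos[of q "Suc i"] by (simp add: AP_diag)
next
  fix i j :: nat assume "i < j" then show "AP q i j = 0" by (rule AP_up)
qed

lemma Dg_AP: "0 < q \<Longrightarrow> q \<noteq> 1 \<Longrightarrow> k \<le> m \<Longrightarrow> Dg (AP q) k m = qfact q (Suc m) / qfact q k"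
  using qfact_split[of k m q] qfact_pos[of q k] by (simp add: Dg_def AP_diag)

definition APp :: "nat \<Rightarrow> nat \<Rightarrow> int poly" where
  "APp k j = hP [:0,1:] (2 * int j - int k) (int k - int j + 1) (int k - int j + 1)"

lemma evp_APp: "evp (APp k j) x = AP x k j"
  by (simp add: APp_def evp_hP AP_def hsym_def)

definition Pf :: "nat \<Rightarrow> nat \<Rightarrow> int poly" where
  "Pf m j = (if j \<le> m then (-1) ^ j * trinv APp m (m - j) else 0)"

lemma evp_Pf: "k \<le> m \<Longrightarrow> evp (Pf m (m - k)) x = (-1) ^ (m - k) * trinv (AP x) m k"
  by (simp add: Pf_def evp_trinv evp_APp)


context lowtri begin
lemma solve:
  assumes X: "\<And>k. k \<in> {lo..hi} \<Longrightarrow> X k = (\<Sum>j=lo..hi. A k j * Y j)"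
  and m: "m \<in> {lo..hi}"
  shows "Y m = (\<Sum>k=lo..hi. Bm A m k * X k)"
proof -
  have "(\<Sum>k=lo..hi. Bm A m k * X k) = (\<Sum>k=lo..hi. \<Sum>j=lo..hi. Bm A m k * A k j * Y j)"
    using X by (simp add: sum_distrib_left mult.assoc)
  also have "\<dots> = (\<Sum>j=lo..hi. \<Sum>k=lo..hi. Bm A m k * A k j * Y j)" by (rule sum.swap)
  also have "\<dots> = (\<Sum>j=lo..hi. (\<Sum>k=lo..hi. Bm A m k * A k j) * Y j)"
    by (simp add: sum_distrib_right)
  also have "\<dots> = (\<Sum>j\<in>{lo..hi}. if j = m then Y m else 0)"
    using left_inv m by (intro sum.cong) auto
  also have "\<dots> = Y m" using m by (simp add: sum.delta')
  finally show ?thesis by simp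
qed
end

context sfix begin

lemma qL': "qint (s^2) j = s ^ j * L s j / s"
  using qL[of j] s_ne by (simp add: field_simps)

lemma L2_nz: "L s 2 \<noteq> 0" using L_pos[of 2] by simp

lemma Ssum_odd: "Ssum (2*m+1) n (s^2) = s ^ ((2*m+2)*n) / (s^2 * L s 2) * SP s m n"
proof -
  have sq: "sqrt (s^2) = s" using spos by simp
  have t: "qint (s^2) (2*i) / qint (s^2) 2 * qint (s^2) i ^ (2*m) * s ^ ((2*m+2)*(n-i))
      = s ^ ((2*m+2)*n) / (s^2 * L s 2) * (L s (2*i) * (L s i ^ 2 / s ^ 2) ^ m)"
    if i: "i \<in> {1..n}" for i
  proof -
    obtain d where d: "n = i + d" using i by (metis atLeastAtMost_iff le_Suc_ex)
    have e: "s ^ (2*i) * (s ^ i) ^ (2*m) * s ^ ((2*m+2)*(n-i)) = s ^ ((2*m+2)*n)"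
    proof -
      have "s ^ (2*i) * (s ^ i) ^ (2*m) * s ^ ((2*m+2)*(n-i)) = s ^ (2*i + i*(2*m) + (2*m+2)*d)"
        by (simp add: d power_add power_mult)
      also have "2*i + i*(2*m) + (2*m+2)*d = (2*m+2)*n" by (simp add: d algebra_simps)
      finally show ?thesis .
    qed
    have "qint (s^2) (2*i) / qint (s^2) 2 * qint (s^2) i ^ (2*m) * s ^ ((2*m+2)*(n-i))
        = (s ^ (2*i) * L s (2*i) / s) / (s ^ 2 * L s 2 / s) * (s ^ i * L s i / s) ^ (2*m) * s ^ ((2*m+2)*(n-i))"
      by (simp only: qL')
    also have "\<dots> = L s (2*i) * L s i ^ (2*m) / (L s 2 * s ^ 2 * s ^ (2*m)) *
        (s ^ (2*i) * (s ^ i) ^ (2*m) * s ^ ((2*m+2)*(n-i)))"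
      using s_ne L2_nz by (simp add: field_simps power_mult_distrib power_divide)
    also have "\<dots> = s ^ ((2*m+2)*n) / (s^2 * L s 2) * (L s (2*i) * (L s i ^ 2 / s ^ 2) ^ m)"
      unfolding e using s_ne L2_nz by (simp add: field_simps power_mult power_divide power2_eq_square power_mult_distrib)
    finally show ?thesis .
  qed
  have "Ssum (2*m+1) n (s^2) = (\<Sum>i=1..n. qint (s^2) (2*i) / qint (s^2) 2 * qint (s^2) i ^ (2*m) * s ^ ((2*m+2)*(n-i)))"
    unfolding Ssum_def sq by (simp add: mult.commute)
  also have "\<dots> = (\<Sum>i=1..n. s ^ ((2*m+2)*n) / (s^2 * L s 2) * (L s (2*i) * (L s i ^ 2 / s ^ 2) ^ m))"
    using t by (rule sum.cong[OF refl])
  also have "\<dots> = s ^ ((2*m+2)*n) / (s^2 * L s 2) * SP s m n"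
    by (simp add: SP_def sum_distrib_left)
  finally show ?thesis .
qed

lemma u_conv: "qint (s^2) n * qint (s^2) (Suc n) = s ^ (2*n+1) * V s n / s^2"
  unfolding qL' V_def using s_ne by (simp add: field_simps power_add power2_eq_square mult_2 power_mult)

lemma neg_pow: "(- x) ^ j * (-1) ^ j = (x::real) ^ j"
  by (simp add: power_mult_distrib[symmetric])

lemma term_P:
  assumes "k \<le> m"
  shows "(- ((s^2)^n)) ^ (m-k) * (-1) ^ (m-k) * (qint (s^2) n * qint (s^2) (n+1)) ^ (k+1) / qint (s^2) 2
     = s ^ ((2*m+2)*n) / (s^2 * L s 2) * (V s n ^ (k+1) / s ^ k)"
proof -
  obtain e where e: "m = k + e" using assms le_Suc_ex by blast
  have q2: "qint (s^2) 2 = s * L s 2" using qL'[of 2] s_ne by (simp add: power2_eq_square)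
  have "(- ((s^2)^n)) ^ (m-k) * (-1) ^ (m-k) * (qint (s^2) n * qint (s^2) (n+1)) ^ (k+1) / qint (s^2) 2
      = s ^ (2*n*(m-k)) * (s ^ (2*n+1) * V s n / s^2) ^ (k+1) / (s * L s 2)"
  proof -
    have "((s^2)^n)^(m-k) = s ^ (2*n*(m-k))" by (simp add: power_mult)
    then show ?thesis by (simp only: neg_pow u_conv q2 Suc_eq_plus1[symmetric])
  qed
  also have "\<dots> = V s n ^ (k+1) / L s 2 * (s ^ (2*n*(m-k) + (2*n+1)*(k+1)) / s ^ (2*(k+1)+1))"
  proof -
    have p: "(s ^ (2*n+1) * V s n / s^2) ^ (k+1) = s ^ ((2*n+1)*(k+1)) * V s n ^ (k+1) / s ^ (2*(k+1))"
      by (simp only: power_mult_distrib power_divide power_mult)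
    have g: "sA * (sB * W / sC) / (s * l) = W / l * (sA * sB / (sC * s))" for sA sB sC W l :: real
      by (simp add: divide_inverse mult_ac)
    show ?thesis unfolding p g by (simp add: power_add)
  qed
  also have "s ^ (2*n*(m-k) + (2*n+1)*(k+1)) / s ^ (2*(k+1)+1) = s ^ ((2*m+2)*n) / s ^ (k+2)"
    by (rule pow_ratio) (simp_all add: s_ne e algebra_simps)
  also have "V s n ^ (k+1) / L s 2 * (s ^ ((2*m+2)*n) / s ^ (k+2)) = s ^ ((2*m+2)*n) / (s^2 * L s 2) * (V s n ^ (k+1) / s ^ k)"
    using s_ne L2_nz by (simp add: field_simps power_add power2_eq_square)
  finally show ?thesis .
qed

lemma P_ident:
  shows "Ssum (2*m+1) n (s^2) = (\<Sum>k=0..m. (- ((s^2) ^ n)) ^ (m - k) * qfact (s^2) k / qfact (s^2) (m+1)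
            * evp (Pf m (m - k)) (s^2) * (qint (s^2) n * qint (s^2) (n+1)) ^ (k+1) / qint (s^2) 2)"
proof -
  define A where "A = AP (s^2)"
  have q0: "0 < s^2" "s^2 \<noteq> 1" using spos s_ne by auto
  interpret lowtri A 0 m unfolding A_def using lowtri_AP[OF q0] .
  have X: "V s n ^ (k+1) / s ^ k = (\<Sum>j=0..m. A k j * SP s j n)" if k: "k \<in> {0..m}" for k
  proof -
    have "V s n ^ (k+1) / s ^ k = (\<Sum>j\<le>k. A k j * SP s j n)"
      using P_sum[of n k] s_ne by (simp add: A_def)
    also have "\<dots> = (\<Sum>j=0..m. A k j * SP s j n)"
      using k by (intro sum.mono_neutral_left) (auto simp: A_def AP_up)
    finally show ?thesis .
  qed
  have Y: "SP s m n = (\<Sum>k=0..m. Bm A m k * (V s n ^ (k+1) / s ^ k))"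
    by (rule solve[OF X]) auto
  have c: "qfact (s^2) k / qfact (s^2) (m+1) * evp (Pf m (m - k)) (s^2) = (-1) ^ (m-k) * Bm A m k"
    if k: "k \<in> {0..m}" for k
  proof -
    have km: "k \<le> m" using k by simp
    have "Bm A m k = trinv A m k / (qfact (s^2) (Suc m) / qfact (s^2) k)"
      using km Dg_AP[OF q0 km] by (simp add: Bm_def A_def)
    moreover have "qfact (s^2) k \<noteq> 0" "qfact (s^2) (Suc m) \<noteq> 0" using qfact_pos[OF q0] by (auto simp: less_imp_neq[symmetric])
    ultimately show ?thesis using evp_Pf[OF km, of "s^2"] by (simp add: A_def field_simps)
  qed
  have "Ssum (2*m+1) n (s^2) = s ^ ((2*m+2)*n) / (s^2 * L s 2) * SP s m n" by (rule Ssum_odd)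
  also have "\<dots> = (\<Sum>k=0..m. Bm A m k * (s ^ ((2*m+2)*n) / (s^2 * L s 2) * (V s n ^ (k+1) / s ^ k)))"
    unfolding Y sum_distrib_left by (intro sum.cong) (simp_all add: mult_ac)
  also have "\<dots> = (\<Sum>k=0..m. (- ((s^2) ^ n)) ^ (m - k) * qfact (s^2) k / qfact (s^2) (m+1)
            * evp (Pf m (m - k)) (s^2) * (qint (s^2) n * qint (s^2) (n+1)) ^ (k+1) / qint (s^2) 2)"
  proof (rule sum.cong[OF refl])
    fix k assume k: "k \<in> {0..m}"
    have "(- ((s^2) ^ n)) ^ (m - k) * qfact (s^2) k / qfact (s^2) (m+1)
            * evp (Pf m (m - k)) (s^2) * (qint (s^2) n * qint (s^2) (n+1)) ^ (k+1) / qint (s^2) 2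
        = Bm A m k * ((- ((s^2)^n)) ^ (m-k) * (-1) ^ (m-k) * (qint (s^2) n * qint (s^2) (n+1)) ^ (k+1) / qint (s^2) 2)"
    proof -
      have g: "c1 * c2 / c3 * e * u / d = (c2 / c3 * e) * (c1 * u / d)" for c1 c2 c3 e u d :: real
        by (simp add: divide_inverse mult_ac)
      show ?thesis unfolding g c[OF k] by (simp add: divide_inverse mult_ac)
    qed
    also have "\<dots> = Bm A m k * (s ^ ((2*m+2)*n) / (s^2 * L s 2) * (V s n ^ (k+1) / s ^ k))"
      using term_P k by simp
    finally show "Bm A m k * (s ^ ((2*m+2)*n) / (s^2 * L s 2) * (V s n ^ (k+1) / s ^ k)) = 
        (- ((s^2) ^ n)) ^ (m - k) * qfact (s^2) k / qfact (s^2) (m+1)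
            * evp (Pf m (m - k)) (s^2) * (qint (s^2) n * qint (s^2) (n+1)) ^ (k+1) / qint (s^2) 2" by simp
  qed
  finally show ?thesis .
qed

end

lemma sfix_sqrt: "0 < q \<Longrightarrow> q \<noteq> 1 \<Longrightarrow> sfix (sqrt q)"
  by unfold_locales auto

lemma sqrt_sq: "0 < q \<Longrightarrow> (sqrt q)^2 = q" by simp

lemma inf_q: "infinite {q::real. 0 < q \<and> q \<noteq> 1}"
proof -
  have "{q::real. 0 < q \<and> q \<noteq> 1} = {0<..} - {1}" by auto
  moreover have "infinite ({0<..} - {1::real})"
    using infinite_Ioi[of "0::real"] by (metis finite_Diff2 finite.emptyI finite_insert)
  ultimately show ?thesis by simp
qed

context sfix begin

lemma zero_coeffs:
  assumes "\<And>n. 1 \<le> n \<Longrightarrow> (\<Sum>k=0..m. c k * V s n ^ (k + off)) = 0" and "k \<le> m"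
  shows "c k = 0"
proof -
  define d where "d j = (if off \<le> j \<and> j - off \<le> m then c (j - off) else 0)" for j
  have "(\<Sum>j\<le>m + off. d j * V s n ^ j) = 0" if n: "1 \<le> n" for n
  proof -
    have "(\<Sum>j\<le>m + off. d j * V s n ^ j) = (\<Sum>j\<in>{off..m+off}. d j * V s n ^ j)"
      by (intro sum.mono_neutral_right) (auto simp: d_def)
    also have "\<dots> = (\<Sum>k=0..m. d (k + off) * V s n ^ (k + off))"
      by (rule sum.reindex_bij_witness[where j="\<lambda>j. j - off" and i="\<lambda>k. k + off"]) auto
    also have "\<dots> = (\<Sum>k=0..m. c k * V s n ^ (k + off))" by (intro sum.cong) (auto simp: d_def)
    finally show ?thesis using assms(1)[OF n] by simp
  qed
  then have "d (k + off) = 0" using uniq_V[where m="m + off" and d=d and k="k + off"] assms(2) by simp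
  then show ?thesis by (simp add: d_def assms(2))
qed

lemma P_uniq:
  assumes H: "\<And>n. 1 \<le> n \<Longrightarrow> Ssum (2*m+1) n (s^2) = (\<Sum>k=0..m. (- ((s^2) ^ n)) ^ (m - k) * qfact (s^2) k / qfact (s^2) (m+1)
            * evp (f (m - k)) (s^2) * (qint (s^2) n * qint (s^2) (n+1)) ^ (k+1) / qint (s^2) 2)"
  and k: "k \<le> m"
  shows "evp (f (m - k)) (s^2) = evp (Pf m (m - k)) (s^2)"
proof -
  define w where "w k = qfact (s^2) k / qfact (s^2) (m+1) * (-1) ^ (m-k)" for k
  define C where "C n = s ^ ((2*m+2)*n) / (s^2 * L s 2)" for n
  have T: "(- ((s^2) ^ n)) ^ (m - k) * qfact (s^2) k / qfact (s^2) (m+1)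
            * e * (qint (s^2) n * qint (s^2) (n+1)) ^ (k+1) / qint (s^2) 2
         = C n * (w k * e / s ^ k * V s n ^ (k+1))" if "k \<le> m" for e n k
  proof -
    have g: "a * c2 / c3 * e * u / d = (c2 / c3 * e * (-1) ^ (m-k)) * (a * (-1)^(m-k) * u / d)" for a c2 c3 u d :: real
    proof -
      have "((-1::real) ^ (m-k)) * (-1) ^ (m-k) = 1" by (simp flip: power_add)
      then show ?thesis by (simp add: divide_inverse mult_ac)
    qed
    show ?thesis unfolding g term_P[OF that] by (simp add: w_def C_def mult_ac)
  qed
  have "(\<Sum>k=0..m. (w k * (evp (f (m - k)) (s^2) - evp (Pf m (m - k)) (s^2)) / s ^ k) * V s n ^ (k + 1)) = 0"
    if n: "1 \<le> n" for n
  proof -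
    have C0: "C n \<noteq> 0" using s_ne L2_nz by (simp add: C_def)
    have "C n * (\<Sum>k=0..m. (w k * (evp (f (m - k)) (s^2) - evp (Pf m (m - k)) (s^2)) / s ^ k) * V s n ^ (k + 1))
        = (\<Sum>k=0..m. C n * (w k * evp (f (m - k)) (s^2) / s ^ k * V s n ^ (k+1)))
          - (\<Sum>k=0..m. C n * (w k * evp (Pf m (m - k)) (s^2) / s ^ k * V s n ^ (k+1)))"
      by (simp add: sum_distrib_left sum_subtractf[symmetric] algebra_simps diff_divide_distrib)
    also have "\<dots> = Ssum (2*m+1) n (s^2) - Ssum (2*m+1) n (s^2)"
    proof -
      have a1: "(\<Sum>k=0..m. C n * (w k * evp (f (m - k)) (s^2) / s ^ k * V s n ^ (k+1))) = Ssum (2*m+1) n (s^2)"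
        unfolding H[OF n] by (intro sum.cong refl, rule T[symmetric], simp)
      have a2: "(\<Sum>k=0..m. C n * (w k * evp (Pf m (m - k)) (s^2) / s ^ k * V s n ^ (k+1))) = Ssum (2*m+1) n (s^2)"
        unfolding P_ident by (intro sum.cong refl, rule T[symmetric], simp)
      show ?thesis unfolding a1 a2 ..
    qed
    finally show ?thesis using C0 by simp
  qed
  then have "w k * (evp (f (m - k)) (s^2) - evp (Pf m (m - k)) (s^2)) / s ^ k = 0"
    using zero_coeffs[where c = "\<lambda>k. w k * (evp (f (m - k)) (s^2) - evp (Pf m (m - k)) (s^2)) / s ^ k" and off = 1] k
    by blast
  moreover have "w k \<noteq> 0" using qfact_pos[of "s^2"] s_ne spos by (simp add: w_def less_imp_neq[symmetric])
  ultimately show ?thesis using s_ne by simp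
qed

end

lemma Pfam_eq: "Pfam m = Pf m"
  unfolding Pfam_def
proof (rule the_equality)
  show "(\<forall>j>m. Pf m j = 0) \<and> (\<forall>n\<ge>1. \<forall>q::real. 0 < q \<and> q \<noteq> 1 \<longrightarrow>
        Ssum (2*m+1) n q = (\<Sum>k=0..m. (- (q ^ n)) ^ (m - k) * qfact q k / qfact q (m+1)
            * evp (Pf m (m - k)) q * (qint q n * qint q (n+1)) ^ (k+1) / qint q 2))"
  proof (intro conjI allI impI)
    fix j assume "j > m" then show "Pf m j = 0" by (simp add: Pf_def)
  next
    fix n :: nat and q :: real assume "1 \<le> n" "0 < q \<and> q \<noteq> 1"
    then interpret sfix "sqrt q" using sfix_sqrt by auto
    show "Ssum (2*m+1) n q = (\<Sum>k=0..m. (- (q ^ n)) ^ (m - k) * qfact q k / qfact q (m+1)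
            * evp (Pf m (m - k)) q * (qint q n * qint q (n+1)) ^ (k+1) / qint q 2)"
      using P_ident[of m n] \<open>0 < q \<and> q \<noteq> 1\<close> by simp
  qed
next
  fix f assume H: "(\<forall>j>m. f j = 0) \<and> (\<forall>n\<ge>1. \<forall>q::real. 0 < q \<and> q \<noteq> 1 \<longrightarrow>
        Ssum (2*m+1) n q = (\<Sum>k=0..m. (- (q ^ n)) ^ (m - k) * qfact q k / qfact q (m+1)
            * evp (f (m - k)) q * (qint q n * qint q (n+1)) ^ (k+1) / qint q 2))"
  show "f = Pf m"
  proof
    fix j
    show "f j = Pf m j"
    proof (cases "j \<le> m")
      case False then show ?thesis using H by (simp add: Pf_def)
    next
      case True
      show ?thesis
      proof (rule evp_inj[OF inf_q])
        fix q :: real assume q: "q \<in> {q. 0 < q \<and> q \<noteq> 1}"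
        then interpret sfix "sqrt q" using sfix_sqrt by auto
        have "evp (f (m - (m - j))) ((sqrt q)^2) = evp (Pf m (m - (m - j))) ((sqrt q)^2)"
          by (rule P_uniq) (use H q in auto)
        then show "evp (f j) q = evp (Pf m j) q" using True q by simp
      qed
    qed
  qed
qed

lemma inverse_onI:
  assumes "lowtri A lo hi" "B = Bm A"
  shows "inverse_on lo hi A B"
proof -
  interpret lowtri A lo hi by fact
  show ?thesis unfolding inverse_on_def assms(2) using right_inv left_inv by auto
qed

lemma thm_P:
  assumes "0 < q" "q \<noteq> 1"
  shows "inverse_on 0 n
      (\<lambda>k m. hsym (2 * int m - int k) (int k - int m + 1) q)
      (\<lambda>k m. if m \<le> k then (-1) ^ (k - m) * qfact q m / qfact q (k+1) * evp (Ppol k (k - m)) q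
             else 0)"
proof -
  have A: "(\<lambda>k m. hsym (2 * int m - int k) (int k - int m + 1) q) = AP q"
    by (simp add: AP_def[abs_def])
  have B: "(\<lambda>k m. if m \<le> k then (-1) ^ (k - m) * qfact q m / qfact q (k+1) * evp (Ppol k (k - m)) q
             else 0) = Bm (AP q)"
  proof (intro ext)
    fix k m
    show "(if m \<le> k then (-1) ^ (k - m) * qfact q m / qfact q (k+1) * evp (Ppol k (k - m)) q
             else 0) = Bm (AP q) k m"
    proof (cases "m \<le> k")
      case True
      have "(-1::real) ^ (k - m) * (-1) ^ (k - m) = 1" by (simp flip: power_add)
      moreover have "qfact q m \<noteq> 0" "qfact q (Suc k) \<noteq> 0" using qfact_pos assms by (auto simp: less_imp_neq[symmetric])
      ultimately show ?thesis using True
        by (simp add: Dg_AP[OF assms True] Ppol_def Pfam_eq evp_Pf Bm_def field_simps)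
    qed (simp add: Bm_def)
  qed
  show ?thesis unfolding A B by (rule inverse_onI[OF lowtri_AP[OF assms] refl])
qed


definition ST :: "real \<Rightarrow> nat \<Rightarrow> nat \<Rightarrow> real" where
  "ST s j n = (\<Sum>i=1..n. (-1) ^ (n - i) * (L s i ^ 2 / s ^ 2) ^ j)"

lemma alt_Suc: "(\<Sum>i=1..Suc n. (-1) ^ (Suc n - i) * (x i::real)) = x (Suc n) - (\<Sum>i=1..n. (-1) ^ (n - i) * x i)"
proof -
  have "(\<Sum>i=1..n. (-1) ^ (Suc n - i) * x i) = (\<Sum>i=1..n. - ((-1) ^ (n - i) * x i))"
    by (rule sum.cong) (auto simp: Suc_diff_le)
  also have "\<dots> = - (\<Sum>i=1..n. (-1) ^ (n - i) * x i)" by (simp add: sum_negf)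
  finally have "(\<Sum>i=1..n. (-1) ^ (Suc n - i) * x i) = - (\<Sum>i=1..n. (-1) ^ (n - i) * x i)" .
  then show ?thesis by simp
qed

lemma AG_00: "AG q 0 0 = 2" by (simp add: AG_def gpol_def hh_zero)
lemma AG_10: "AG q 1 0 = 0" by (simp add: AG_def gpol_def hh_neg)
lemma AG_11: "AG q 1 1 = 1 + q" by (simp add: AG_def gpol_def hh_10 hh_01)
lemma AG_diag: "AG q i i = 1 + q ^ i" by (simp add: AG_def gpol_def hh_10 hh_01)
lemma AG_k0: "1 \<le> k \<Longrightarrow> AG q k 0 = 0" by (simp add: AG_def gpol_def hh_neg)

context sfix begin

lemma G_core:
  "L s (Suc n) ^ k * (L s (Suc (Suc n)) ^ k + L s n ^ k)
     = s ^ k * (\<Sum>j\<le>k. AG (s^2) k j * (L s (Suc n) ^ 2 / s ^ 2) ^ j)"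
proof -
  define a where "a = L s (Suc (Suc n))"
  define b where "b = L s n"
  define y where "y = L s (Suc n)"
  define G where "G k = y ^ k * (a ^ k + b ^ k) / s ^ k" for k
  define z where "z = y ^ 2 / s ^ 2"
  have ab1: "a + b = (s + 1/s) * y" unfolding a_def b_def y_def using Lrec .
  have ab2: "a * b = y ^ 2 - 1" unfolding a_def b_def y_def using Lprod .
  have sn: "s \<noteq> 0" using s_ne by simp
  have "G k = (\<Sum>j\<le>k. AG (s^2) k j * z ^ j)"
  proof (rule gen_rec[where a = "1 + s^2" and b = "s^2"])
    show "\<And>k j. k < j \<Longrightarrow> AG (s^2) k j = 0" by (rule AG_up)
    show "\<And>k j. 2 \<le> k \<Longrightarrow> AG (s^2) k j = (1 + s^2) * (if 1 \<le> j then AG (s^2) (k-1) (j-1) else 0)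
         - s^2 * (if 2 \<le> j then AG (s^2) (k-2) (j-2) else 0) + (if 1 \<le> j then AG (s^2) (k-2) (j-1) else 0)"
      by (rule AG_rec)
    show "G k = (1 + s^2) * z * G (k-1) - (s^2 * z^2 - z) * G (k-2)" if k2: "2 \<le> k" for k
    proof -
      obtain p where p: "k = Suc (Suc p)" using k2 by (metis add_2_eq_Suc le_Suc_ex)
      have h: "a ^ k + b ^ k = (s + 1/s) * y * (a ^ Suc p + b ^ Suc p) - (y^2 - 1) * (a ^ p + b ^ p)"
        unfolding p ab1[symmetric] ab2[symmetric] by (simp add: algebra_simps)
      have gen: "(y*y*Y)*((s+1/s)*y*H1 - (y^2-1)*H0)/(s*s*S) = (1+s^2)*(y^2/s^2)*((y*Y)*H1/(s*S)) - (s^2*(y^2/s^2)^2 - y^2/s^2)*(Y*H0/S)"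
        if "S \<noteq> 0" for S Y H1 H0 using that sn by (simp add: field_simps power2_eq_square)
      have "G k = (y*y*y^p)*((s+1/s)*y*(a ^ Suc p + b ^ Suc p) - (y^2-1)*(a ^ p + b ^ p))/(s*s*s^p)"
        unfolding G_def h by (simp add: p)
      also have "\<dots> = (1+s^2)*(y^2/s^2)*((y*y^p)*(a ^ Suc p + b ^ Suc p)/(s*s^p)) - (s^2*(y^2/s^2)^2 - y^2/s^2)*(y^p*(a ^ p + b ^ p)/s^p)"
        by (rule gen) (simp add: sn)
      also have "\<dots> = (1 + s^2) * z * G (k-1) - (s^2 * z^2 - z) * G (k-2)"
        unfolding G_def z_def p by simp
      finally show ?thesis .
    qed
    show "G 0 = AG (s^2) 0 0" by (simp add: G_def AG_00)
    show "G 1 = AG (s^2) 1 0 + AG (s^2) 1 1 * z"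
    proof -
      have "G 1 = y * (a + b) / s" by (simp add: G_def)
      then show ?thesis using ab1 sn unfolding z_def AG_10 AG_11 by (simp add: field_simps power2_eq_square)
    qed
  qed
  then show ?thesis using sn unfolding G_def z_def y_def a_def b_def by (simp add: field_simps)
qed

lemma G_tele:
  "V s (Suc n) ^ k + V s n ^ k = s ^ k * (\<Sum>j\<le>k. AG (s^2) k j * (L s (Suc n) ^ 2 / s ^ 2) ^ j)"
proof -
  have "V s (Suc n) ^ k + V s n ^ k = L s (Suc n) ^ k * (L s (Suc (Suc n)) ^ k + L s n ^ k)"
    unfolding V_def by (simp add: power_mult_distrib algebra_simps)
  then show ?thesis using G_core by simp
qed

lemma G_sum: "1 \<le> k \<Longrightarrow> V s n ^ k = s ^ k * (\<Sum>j\<le>k. AG (s^2) k j * ST s j n)"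
proof (induction n)
  case 0
  then show ?case by (simp add: V_def ST_def)
next
  case (Suc n)
  have "V s (Suc n) ^ k = - (V s n ^ k) + s ^ k * (\<Sum>j\<le>k. AG (s^2) k j * (L s (Suc n) ^ 2 / s ^ 2) ^ j)"
    using G_tele[of n k] by simp
  also have "\<dots> = s ^ k * (\<Sum>j\<le>k. AG (s^2) k j * ST s j (Suc n))"
    using Suc unfolding ST_def alt_Suc[where x="\<lambda>i. (L s i ^ 2 / s ^ 2) ^ _"]
    by (simp add: sum_distrib_left sum_subtractf algebra_simps)
  finally show ?case .
qed

lemma Tsum_even: "Tsum (2*m) n (s^2) = s ^ (2*m*n) * ST s m n"
proof -
  have sq: "sqrt (s^2) = s" using spos by simp
  have t: "(-1) ^ (n - i) * qint (s^2) i ^ (2*m) * s ^ (2*m*(n-i)) = s ^ (2*m*n) * ((-1) ^ (n - i) * (L s i ^ 2 / s ^ 2) ^ m)"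
    if i: "i \<in> {1..n}" for i
  proof -
    obtain d where d: "n = i + d" using i by (metis atLeastAtMost_iff le_Suc_ex)
    have e: "(s ^ i) ^ (2*m) * s ^ (2*m*(n-i)) = s ^ (2*m*n)"
    proof -
      have "(s ^ i) ^ (2*m) * s ^ (2*m*(n-i)) = s ^ (i*(2*m) + 2*m*d)"
        by (simp add: d power_add power_mult)
      also have "i*(2*m) + 2*m*d = 2*m*n" by (simp add: d algebra_simps)
      finally show ?thesis .
    qed
    have "(-1) ^ (n - i) * qint (s^2) i ^ (2*m) * s ^ (2*m*(n-i))
        = (-1) ^ (n - i) * (s ^ i * L s i / s) ^ (2*m) * s ^ (2*m*(n-i))"
      by (simp only: qL')
    also have "\<dots> = (-1) ^ (n - i) * L s i ^ (2*m) / s ^ (2*m) * ((s ^ i) ^ (2*m) * s ^ (2*m*(n-i)))"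
      using s_ne by (simp add: field_simps power_mult_distrib power_divide)
    also have "\<dots> = s ^ (2*m*n) * ((-1) ^ (n - i) * (L s i ^ 2 / s ^ 2) ^ m)"
      unfolding e using s_ne by (simp add: field_simps power_mult power_divide power2_eq_square power_mult_distrib)
    finally show ?thesis .
  qed
  have "Tsum (2*m) n (s^2) = (\<Sum>i=1..n. (-1) ^ (n - i) * qint (s^2) i ^ (2*m) * s ^ (2*m*(n-i)))"
    unfolding Tsum_def sq by simp
  also have "\<dots> = (\<Sum>i=1..n. s ^ (2*m*n) * ((-1) ^ (n - i) * (L s i ^ 2 / s ^ 2) ^ m))"
    using t by (rule sum.cong[OF refl])
  also have "\<dots> = s ^ (2*m*n) * ST s m n"
    by (simp add: ST_def sum_distrib_left)
  finally show ?thesis .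
qed

end

definition AGp :: "nat \<Rightarrow> nat \<Rightarrow> int poly" where
  "AGp k j = hP [:0,1:] (2 * int j - int k) (int k - int j + 1) (int k - int j)
           + hP [:0,1:] (2 * int j - int k) (int k - int j) (int k - int j + 1)"

lemma evp_AGp: "evp (AGp k j) x = AG x k j"
  by (simp add: AGp_def evp_hP AG_def gpol_def)

definition Gf :: "nat \<Rightarrow> nat \<Rightarrow> int poly" where
  "Gf m j = (if j < m then (-1) ^ j * trinv AGp m (m - j) else 0)"

lemma evp_Gf: "1 \<le> k \<Longrightarrow> k \<le> m \<Longrightarrow> evp (Gf m (m - k)) x = (-1) ^ (m - k) * trinv (AG x) m k"
  by (simp add: Gf_def evp_trinv evp_AGp)

lemma lowtri_AG: "0 < q \<Longrightarrow> lowtri (AG q) lo hi"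
proof
  fix i assume "0 < q"
  then show "AG q i i \<noteq> 0" by (simp add: AG_diag add_pos_pos less_imp_neq[symmetric])
next
  fix i j :: nat assume "i < j" then show "AG q i j = 0" by (rule AG_up)
qed

lemma prod_rev: "(k::nat) \<le> m \<Longrightarrow> (\<Prod>i\<in>{k..m}. f i) = (\<Prod>i=0..m-k. (f (m - i) :: real))"
  by (rule prod.reindex_bij_witness[where i="\<lambda>i. m - i" and j="\<lambda>i. m - i"]) auto

lemma Dg_AG: "k \<le> m \<Longrightarrow> Dg (AG q) k m = (\<Prod>i=0..m-k. 1 + q ^ (m - i))"
  unfolding Dg_def AG_diag by (rule prod_rev)

context sfix begin

lemma term_G:
  assumes "k \<le> m"
  shows "(- ((s^2)^n)) ^ (m-k) * (-1) ^ (m-k) * (qint (s^2) n * qint (s^2) (n+1)) ^ k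
     = s ^ (2*m*n) * (V s n ^ k / s ^ k)"
proof -
  obtain e where e: "m = k + e" using assms le_Suc_ex by blast
  have "(- ((s^2)^n)) ^ (m-k) * (-1) ^ (m-k) * (qint (s^2) n * qint (s^2) (n+1)) ^ k
      = s ^ (2*n*(m-k)) * (s ^ (2*n+1) * V s n / s^2) ^ k"
  proof -
    have "((s^2)^n)^(m-k) = s ^ (2*n*(m-k))" by (simp add: power_mult)
    then show ?thesis by (simp only: neg_pow u_conv Suc_eq_plus1[symmetric])
  qed
  also have "\<dots> = V s n ^ k * (s ^ (2*n*(m-k) + (2*n+1)*k) / s ^ (2*k))"
  proof -
    have p: "(s ^ (2*n+1) * V s n / s^2) ^ k = s ^ ((2*n+1)*k) * V s n ^ k / s ^ (2*k)"
      by (simp only: power_mult_distrib power_divide power_mult)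
    have g: "sA * (sB * W / sC) = W * (sA * sB / sC)" for sA sB sC W :: real
      by (simp add: divide_inverse mult_ac)
    show ?thesis unfolding p g by (simp add: power_add)
  qed
  also have "s ^ (2*n*(m-k) + (2*n+1)*k) / s ^ (2*k) = s ^ (2*m*n) / s ^ k"
    by (rule pow_ratio) (simp_all add: s_ne e algebra_simps)
  finally show ?thesis by simp
qed

lemma G_ident:
  assumes m1: "1 \<le> m"
  shows "Tsum (2*m) n (s^2) = (\<Sum>k=1..m. (- ((s^2) ^ n)) ^ (m - k) * evp (Gf m (m - k)) (s^2)
             / (\<Prod>i=0..m-k. 1 + (s^2) ^ (m-i)) * (qint (s^2) n * qint (s^2) (n+1)) ^ k)"
proof -
  define A where "A = AG (s^2)"
  have q0: "0 < s^2" using spos by auto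
  interpret lowtri A 1 m unfolding A_def using lowtri_AG[OF q0] .
  have X: "V s n ^ k / s ^ k = (\<Sum>j=1..m. A k j * ST s j n)" if k: "k \<in> {1..m}" for k
  proof -
    have "V s n ^ k / s ^ k = (\<Sum>j\<le>k. A k j * ST s j n)"
      using G_sum[of k n] k s_ne by (simp add: A_def)
    also have "\<dots> = (\<Sum>j\<in>{1..k}. A k j * ST s j n)"
    proof (intro sum.mono_neutral_right)
      show "\<forall>i\<in>{..k} - {1..k}. A k i * ST s i n = 0" using k by (auto simp: A_def AG_k0 Suc_le_eq)
    qed auto
    also have "\<dots> = (\<Sum>j=1..m. A k j * ST s j n)"
      using k by (intro sum.mono_neutral_left) (auto simp: A_def AG_up)
    finally show ?thesis .
  qed
  have Y: "ST s m n = (\<Sum>k=1..m. Bm A m k * (V s n ^ k / s ^ k))"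
    by (rule solve[OF X]) (use m1 in auto)
  have c: "evp (Gf m (m - k)) (s^2) / (\<Prod>i=0..m-k. 1 + (s^2) ^ (m-i)) = (-1) ^ (m-k) * Bm A m k"
    if k: "k \<in> {1..m}" for k
  proof -
    have km: "1 \<le> k" "k \<le> m" using k by auto
    have "(\<Prod>i=0..m-k. 1 + (s^2) ^ (m-i)) > 0"
      by (intro prod_pos) (auto intro!: add_pos_nonneg)
    then have "(\<Prod>i=0..m-k. 1 + (s^2) ^ (m-i)) \<noteq> 0" by linarith
    then show ?thesis using km evp_Gf[OF km, of "s^2"] Dg_AG[OF km(2), of "s^2"]
      by (simp add: Bm_def A_def)
  qed
  have "Tsum (2*m) n (s^2) = s ^ (2*m*n) * ST s m n" by (rule Tsum_even)
  also have "\<dots> = (\<Sum>k=1..m. Bm A m k * (s ^ (2*m*n) * (V s n ^ k / s ^ k)))"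
    unfolding Y sum_distrib_left by (intro sum.cong) (simp_all add: mult_ac)
  also have "\<dots> = (\<Sum>k=1..m. (- ((s^2) ^ n)) ^ (m - k) * evp (Gf m (m - k)) (s^2)
             / (\<Prod>i=0..m-k. 1 + (s^2) ^ (m-i)) * (qint (s^2) n * qint (s^2) (n+1)) ^ k)"
  proof (rule sum.cong[OF refl])
    fix k assume k: "k \<in> {1..m}"
    have "(- ((s^2) ^ n)) ^ (m - k) * evp (Gf m (m - k)) (s^2)
             / (\<Prod>i=0..m-k. 1 + (s^2) ^ (m-i)) * (qint (s^2) n * qint (s^2) (n+1)) ^ k
        = Bm A m k * ((- ((s^2)^n)) ^ (m-k) * (-1) ^ (m-k) * (qint (s^2) n * qint (s^2) (n+1)) ^ k)"
    proof -
      have g: "a * e / p * u = (e / p) * (a * u)" for a e p u :: real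
        by (simp add: divide_inverse mult_ac)
      show ?thesis unfolding g c[OF k] by (simp add: mult_ac)
    qed
    also have "\<dots> = Bm A m k * (s ^ (2*m*n) * (V s n ^ k / s ^ k))"
      using term_G k by simp
    finally show "Bm A m k * (s ^ (2*m*n) * (V s n ^ k / s ^ k)) =
        (- ((s^2) ^ n)) ^ (m - k) * evp (Gf m (m - k)) (s^2)
             / (\<Prod>i=0..m-k. 1 + (s^2) ^ (m-i)) * (qint (s^2) n * qint (s^2) (n+1)) ^ k" by simp
  qed
  finally show ?thesis .
qed

end

lemma inverse_onI':
  assumes "lowtri A lo hi" "\<And>k m. k \<in> {lo..hi} \<Longrightarrow> m \<in> {lo..hi} \<Longrightarrow> B k m = Bm A k m"
  shows "inverse_on lo hi A B"
proof -
  interpret lowtri A lo hi by fact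
  have "(\<Sum>j=lo..hi. A k j * B j m) = (\<Sum>j=lo..hi. A k j * Bm A j m)" if "m \<in> {lo..hi}" for k m
    using assms(2) that by (intro sum.cong) auto
  moreover have "(\<Sum>j=lo..hi. B k j * A j m) = (\<Sum>j=lo..hi. Bm A k j * A j m)" if "k \<in> {lo..hi}" for k m
    using assms(2) that by (intro sum.cong) auto
  ultimately show ?thesis unfolding inverse_on_def using right_inv left_inv by auto
qed

lemma sum_shift1: "1 \<le> (m::nat) \<Longrightarrow> (\<Sum>k=1..m. F k) = (\<Sum>k=0..m-1. F (k + 1) :: real)"
  using sum.shift_bounds_cl_Suc_ivl[of F 0 "m - 1"] by simp

context sfix begin

lemma G_uniq:
  assumes m1: "1 \<le> m"
  and H: "\<And>n. 1 \<le> n \<Longrightarrow> Tsum (2*m) n (s^2) = (\<Sum>k=1..m. (- ((s^2) ^ n)) ^ (m - k) * evp (f (m - k)) (s^2)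
             / (\<Prod>i=0..m-k. 1 + (s^2) ^ (m-i)) * (qint (s^2) n * qint (s^2) (n+1)) ^ k)"
  and k: "1 \<le> k" "k \<le> m"
  shows "evp (f (m - k)) (s^2) = evp (Gf m (m - k)) (s^2)"
proof -
  define w where "w k = (-1) ^ (m-k) / (\<Prod>i=0..m-k. 1 + (s^2) ^ (m-i))" for k
  have T: "(- ((s^2) ^ n)) ^ (m - k) * e / (\<Prod>i=0..m-k. 1 + (s^2) ^ (m-i)) * (qint (s^2) n * qint (s^2) (n+1)) ^ k
         = s ^ (2*m*n) * (w k * e / s ^ k * V s n ^ k)" if "k \<le> m" for e n k
  proof -
    have g: "a * e / p * u = (e / p * (-1) ^ (m-k)) * (a * (-1)^(m-k) * u)" for a p u :: real
    proof -
      have "((-1::real) ^ (m-k)) * (-1) ^ (m-k) = 1" by (simp flip: power_add)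
      then show ?thesis by (simp add: divide_inverse mult_ac)
    qed
    show ?thesis unfolding g term_G[OF that] by (simp add: w_def mult_ac)
  qed
  define c where "c k = w (k+1) * (evp (f (m - (k+1))) (s^2) - evp (Gf m (m - (k+1))) (s^2)) / s ^ (k+1)" for k
  have "(\<Sum>k=0..m-1. c k * V s n ^ (k + 1)) = 0" if n: "1 \<le> n" for n
  proof -
    have C0: "s ^ (2*m*n) \<noteq> 0" using s_ne by simp
    have "s ^ (2*m*n) * (\<Sum>k=0..m-1. c k * V s n ^ (k + 1))
        = s ^ (2*m*n) * (\<Sum>k=1..m. w k * (evp (f (m - k)) (s^2) - evp (Gf m (m - k)) (s^2)) / s ^ k * V s n ^ k)"
      using sum_shift1[OF m1, of "\<lambda>k. w k * (evp (f (m - k)) (s^2) - evp (Gf m (m - k)) (s^2)) / s ^ k * V s n ^ k"]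
      by (simp add: c_def)
    also have "\<dots> = (\<Sum>k=1..m. s ^ (2*m*n) * (w k * evp (f (m - k)) (s^2) / s ^ k * V s n ^ k))
          - (\<Sum>k=1..m. s ^ (2*m*n) * (w k * evp (Gf m (m - k)) (s^2) / s ^ k * V s n ^ k))"
      by (simp add: sum_distrib_left sum_subtractf[symmetric] algebra_simps diff_divide_distrib)
    also have "\<dots> = Tsum (2*m) n (s^2) - Tsum (2*m) n (s^2)"
    proof -
      have a1: "(\<Sum>k=1..m. s ^ (2*m*n) * (w k * evp (f (m - k)) (s^2) / s ^ k * V s n ^ k)) = Tsum (2*m) n (s^2)"
        unfolding H[OF n] by (intro sum.cong refl, rule T[symmetric], simp)
      have a2: "(\<Sum>k=1..m. s ^ (2*m*n) * (w k * evp (Gf m (m - k)) (s^2) / s ^ k * V s n ^ k)) = Tsum (2*m) n (s^2)"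
        unfolding G_ident[OF m1] by (intro sum.cong refl, rule T[symmetric], simp)
      show ?thesis unfolding a1 a2 ..
    qed
    finally have "s ^ (2*m*n) * (\<Sum>k=0..m-1. c k * V s n ^ (k + 1)) = 0" by simp
    then show ?thesis using C0 by (simp only: mult_eq_0_iff) blast
  qed
  then have "c (k - 1) = 0" using zero_coeffs[where c = c and off = 1 and m = "m - 1" and k = "k - 1"] k by auto
  moreover have "w k \<noteq> 0"
  proof -
    have "(\<Prod>i=0..m-k. 1 + (s^2) ^ (m-i)) > 0"
      by (intro prod_pos) (auto intro!: add_pos_nonneg)
    then have P0: "(\<Prod>i=0..m-k. 1 + (s^2) ^ (m-i)) \<noteq> 0" by linarith
    show ?thesis
    proof
      assume "w k = 0"
      then have "(-1::real) ^ (m-k) = 0 \<or> (\<Prod>i=0..m-k. 1 + (s^2) ^ (m-i)) = 0"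
        by (simp only: w_def divide_eq_0_iff)
      then show False using P0 by simp
    qed
  qed
  ultimately show ?thesis using s_ne k by (simp add: c_def)
qed

end

lemma Gfam_eq: "1 \<le> m \<Longrightarrow> Gfam m = Gf m"
  unfolding Gfam_def
proof (rule the_equality)
  assume m1: "1 \<le> m"
  show "(\<forall>j\<ge>m. Gf m j = 0) \<and> (\<forall>n\<ge>1. \<forall>q::real. 0 < q \<and> q \<noteq> 1 \<longrightarrow>
        Tsum (2*m) n q = (\<Sum>k=1..m. (- (q ^ n)) ^ (m - k) * evp (Gf m (m - k)) q
             / (\<Prod>i=0..m-k. 1 + q ^ (m-i)) * (qint q n * qint q (n+1)) ^ k))"
  proof (intro conjI allI impI)
    fix j assume "j \<ge> m" then show "Gf m j = 0" by (simp add: Gf_def)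
  next
    fix n :: nat and q :: real assume "1 \<le> n" "0 < q \<and> q \<noteq> 1"
    then interpret sfix "sqrt q" using sfix_sqrt by auto
    show "Tsum (2*m) n q = (\<Sum>k=1..m. (- (q ^ n)) ^ (m - k) * evp (Gf m (m - k)) q
             / (\<Prod>i=0..m-k. 1 + q ^ (m-i)) * (qint q n * qint q (n+1)) ^ k)"
      using G_ident[OF m1, of n] \<open>0 < q \<and> q \<noteq> 1\<close> by simp
  qed
next
  fix f assume m1: "1 \<le> m" and H: "(\<forall>j\<ge>m. f j = 0) \<and> (\<forall>n\<ge>1. \<forall>q::real. 0 < q \<and> q \<noteq> 1 \<longrightarrow>
        Tsum (2*m) n q = (\<Sum>k=1..m. (- (q ^ n)) ^ (m - k) * evp (f (m - k)) q
             / (\<Prod>i=0..m-k. 1 + q ^ (m-i)) * (qint q n * qint q (n+1)) ^ k))"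
  show "f = Gf m"
  proof
    fix j
    show "f j = Gf m j"
    proof (cases "j < m")
      case False then show ?thesis using H by (simp add: Gf_def)
    next
      case True
      show ?thesis
      proof (rule evp_inj[OF inf_q])
        fix q :: real assume q: "q \<in> {q. 0 < q \<and> q \<noteq> 1}"
        then interpret sfix "sqrt q" using sfix_sqrt by auto
        have "evp (f (m - (m - j))) ((sqrt q)^2) = evp (Gf m (m - (m - j))) ((sqrt q)^2)"
          by (rule G_uniq[OF m1]) (use H q True in auto)
        then show "evp (f j) q = evp (Gf m j) q" using True q by simp
      qed
    qed
  qed
qed

lemma thm_G:
  assumes "0 < q" "q \<noteq> 1"
  shows "inverse_on 1 n
      (\<lambda>k m. gpol (int k) (int m) q)
      (\<lambda>k m. if m \<le> k then (-1) ^ (k - m) * evp (Gpol k (k - m)) q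
                 / (\<Prod>i=0..k-m. 1 + q ^ (k - i))
             else 0)"
proof -
  have A: "(\<lambda>k m. gpol (int k) (int m) q) = AG q" by (simp add: AG_def[abs_def])
  show ?thesis unfolding A
  proof (rule inverse_onI'[OF lowtri_AG[OF assms(1)]])
    fix k m :: nat assume k: "k \<in> {1..n}" and m: "m \<in> {1..n}"
    show "(if m \<le> k then (-1) ^ (k - m) * evp (Gpol k (k - m)) q / (\<Prod>i=0..k-m. 1 + q ^ (k - i)) else 0)
        = Bm (AG q) k m"
    proof (cases "m \<le> k")
      case True
      have "(-1::real) ^ (k - m) * (-1) ^ (k - m) = 1" by (simp flip: power_add)
      moreover have "k \<ge> 1" "m \<ge> 1" using k m by auto
      ultimately show ?thesis using True
        by (simp add: Dg_AG[OF True] Gpol_def Gfam_eq evp_Gf Bm_def)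
    qed (simp add: Bm_def)
  qed
qed


definition AC :: "real \<Rightarrow> nat \<Rightarrow> nat \<Rightarrow> real" where
  "AC t k j = cpol (int k) (int j) t"

definition KK :: "real \<Rightarrow> nat \<Rightarrow> real" where "KK s n = L s (Suc n) + L s n"

definition SQ :: "real \<Rightarrow> nat \<Rightarrow> nat \<Rightarrow> real" where
  "SQ s j n = (\<Sum>i=1..n. L s (2*i) * (L s i ^ 2 / s ^ 2) ^ j / L s i)"

lemma AC_AP: "1 \<le> k \<Longrightarrow> AC t k j = AP (t^2) k j + t * (if 1 \<le> j then AP (t^2) (k-1) (j-1) else 0)"
  by (cases "j = 0") (auto simp: AC_def cpol_def AP_def hsym_def hh_neg of_nat_diff algebra_simps)

lemma shift_z: "z * (\<Sum>j\<le>p. f j * z ^ j) = (\<Sum>j\<le>Suc p. (if 1 \<le> j then f (j - 1) else 0) * (z::real) ^ j)"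
  by (subst sum.atMost_Suc_shift) (simp add: sum_distrib_left mult_ac)

context sfix begin

lemma Q_tele:
  assumes k: "1 \<le> k"
  shows "KK s (Suc n) * V s (Suc n) ^ k - KK s n * V s n ^ k
     = s ^ k * (\<Sum>j\<le>k. AC s k j * (L s (2 * Suc n) * (L s (Suc n) ^ 2 / s ^ 2) ^ j / L s (Suc n)))"
proof -
  obtain p where p: "k = Suc p" using k by (cases k) auto
  define a where "a = L s (Suc (Suc n))"
  define b where "b = L s n"
  define y where "y = L s (Suc n)"
  define z where "z = y ^ 2 / s ^ 2"
  have y0: "y \<noteq> 0" unfolding y_def using L_pos[of "Suc n"] by simp
  have sn: "s \<noteq> 0" using s_ne by simp
  have d: "y * (a - b) = L s (2 * Suc n)" unfolding y_def a_def b_def by (rule Ldiff)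
  have c1: "y ^ k * hs a b k = s ^ k * (\<Sum>j\<le>k. AP (s^2) k j * z ^ j)"
    unfolding y_def a_def b_def z_def by (rule P_core)
  have c2: "y ^ p * hs a b p = s ^ p * (\<Sum>j\<le>p. AP (s^2) p j * z ^ j)"
    unfolding y_def a_def b_def z_def by (rule P_core)
  have "KK s (Suc n) * V s (Suc n) ^ k - KK s n * V s n ^ k
      = (a + y) * (y * a) ^ k - (y + b) * (b * y) ^ k"
    by (simp add: KK_def V_def a_def b_def y_def add.commute)
  also have "\<dots> = y ^ k * ((a ^ Suc k - b ^ Suc k) + y * (a ^ k - b ^ k))"
    by (simp add: power_mult_distrib algebra_simps)
  also have "\<dots> = y ^ k * ((a - b) * hs a b k + y * ((a - b) * hs a b p))"
    by (simp only: hs_diff p)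
  also have "\<dots> = (y * (a - b)) / y * (y ^ k * hs a b k + y ^ 2 * (y ^ p * hs a b p))"
    using y0 by (simp add: p field_simps power2_eq_square)
  also have "\<dots> = L s (2 * Suc n) / y * (s ^ k * (\<Sum>j\<le>k. AP (s^2) k j * z ^ j)
       + y ^ 2 * (s ^ p * (\<Sum>j\<le>p. AP (s^2) p j * z ^ j)))"
    unfolding d c1 c2 ..
  also have "y ^ 2 * (s ^ p * (\<Sum>j\<le>p. AP (s^2) p j * z ^ j)) = s ^ k * (s * (z * (\<Sum>j\<le>p. AP (s^2) p j * z ^ j)))"
    using sn by (simp add: z_def p field_simps power2_eq_square)
  also have "s * (z * (\<Sum>j\<le>p. AP (s^2) p j * z ^ j)) = (\<Sum>j\<le>k. s * (if 1 \<le> j then AP (s^2) p (j - 1) else 0) * z ^ j)"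
    unfolding shift_z p by (simp add: sum_distrib_left distrib_left mult_ac)
  also have "s ^ k * (\<Sum>j\<le>k. AP (s^2) k j * z ^ j) + s ^ k * (\<Sum>j\<le>k. s * (if 1 \<le> j then AP (s^2) p (j - 1) else 0) * z ^ j)
      = s ^ k * (\<Sum>j\<le>k. AC s k j * z ^ j)"
  proof -
    have e: "AC s k j = AP (s^2) k j + s * (if 1 \<le> j then AP (s^2) p (j-1) else 0)" for j
      using AC_AP[OF k, of s j] p by simp
    show ?thesis unfolding e distrib_right sum.distrib distrib_left by (simp add: mult_ac)
  qed
  also have "L s (2 * Suc n) / y * (s ^ k * (\<Sum>j\<le>k. AC s k j * z ^ j))
      = s ^ k * (\<Sum>j\<le>k. AC s k j * (L s (2 * Suc n) * z ^ j / y))"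
    by (simp add: sum_distrib_left sum_divide_distrib mult_ac)
  finally show ?thesis unfolding z_def y_def .
qed

lemma Q_sum: "1 \<le> k \<Longrightarrow> KK s n * V s n ^ k = s ^ k * (\<Sum>j\<le>k. AC s k j * SQ s j n)"
proof (induction n)
  case 0
  then show ?case by (simp add: V_def SQ_def)
next
  case (Suc n)
  have "KK s (Suc n) * V s (Suc n) ^ k = KK s n * V s n ^ k
      + s ^ k * (\<Sum>j\<le>k. AC s k j * (L s (2 * Suc n) * (L s (Suc n) ^ 2 / s ^ 2) ^ j / L s (Suc n)))"
    using Q_tele[OF Suc.prems, of n] by simp
  also have "\<dots> = s ^ k * (\<Sum>j\<le>k. AC s k j * SQ s j (Suc n))"
    using Suc by (simp add: SQ_def sum_distrib_left sum.distrib algebra_simps)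
  finally show ?case .
qed

end

lemma AC_up: "k < j \<Longrightarrow> AC t k j = 0"
  by (cases "j = k + 1") (auto simp: AC_def cpol_def hsym_def hh_neg hh_00)

lemma AC_k0: "1 \<le> k \<Longrightarrow> AC t k 0 = 0"
  by (simp add: AC_def cpol_def hsym_def hh_neg)

lemma AC_diag: "0 < t \<Longrightarrow> t \<noteq> 1 \<Longrightarrow> AC t i i = qint t (2*i+1)"
proof -
  assume t: "0 < t" "t \<noteq> 1"
  have t2: "t^2 \<noteq> 1" using t by (simp add: power2_eq_square) (metis mult_cancel_left1 mult_le_cancel_left1 not_less_iff_gr_or_eq order_less_le)
  have h: "hh (int j) 1 1 (t^2) = (1 - (t^2) ^ Suc j) / (1 - t^2)" for j
    using hh_11_nat[of j "t^2"] t2 by (simp add: sum_gp0)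
  show ?thesis
  proof (cases i)
    case 0
    then show ?thesis using t by (simp add: AC_def cpol_def hsym_def hh_zero hh_neg qint_def)
  next
    case (Suc p)
    have e: "AC t i i = hh (int (Suc p)) 1 1 (t^2) + t * hh (int p) 1 1 (t^2)"
      by (simp add: AC_def cpol_def hsym_def Suc)
    have g: "(1 - t^2 * (t^2 * X)) / (1 - t^2) + t * ((1 - t^2 * X) / (1 - t^2)) = (1 - t^3 * X) / (1 - t)" for X
    proof -
      have a: "1 - t^2 \<noteq> 0" "1 - t \<noteq> 0" "1 + t \<noteq> 0" using t t2 by auto
      have f: "1 - t^2 = (1 - t) * (1 + t)" by (simp add: algebra_simps power2_eq_square)
      have num: "(1 - t^2*(t^2*X)) + t*(1 - t^2*X) = (1+t)*(1 - t^3*X)"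
        by (simp add: algebra_simps power2_eq_square power3_eq_cube)
      have "(1 - t^2 * (t^2 * X)) / (1 - t^2) + t * ((1 - t^2 * X) / (1 - t^2))
          = ((1 - t^2*(t^2*X)) + t*(1 - t^2*X)) / (1 - t^2)"
        by (simp add: add_divide_distrib)
      also have "\<dots> = ((1+t)*(1 - t^3*X)) / ((1 + t) * (1 - t))" unfolding num f by (simp add: mult.commute)
      also have "\<dots> = (1 - t^3*X) / (1 - t)" using a(3) by (rule nonzero_mult_divide_mult_cancel_left)
      finally show ?thesis .
    qed
    have "AC t i i = (1 - t^2 * (t^2 * (t^2)^p)) / (1 - t^2) + t * ((1 - t^2 * (t^2)^p) / (1 - t^2))"
      unfolding e h by simp
    also have "\<dots> = (1 - t^3 * (t^2)^p) / (1 - t)" by (rule g)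
    also have "\<dots> = qint t (2*i+1)"
      by (simp add: qint_def Suc power_mult[symmetric] power_add[symmetric] mult_2 numeral_3_eq_3)
    finally show ?thesis .
  qed
qed

lemma lowtri_AC: "0 < t \<Longrightarrow> t \<noteq> 1 \<Longrightarrow> lowtri (AC t) lo hi"
proof
  fix i assume "0 < t" "t \<noteq> 1"
  then show "AC t i i \<noteq> 0" using qint_pos[of t "2*i+1"] by (simp add: AC_diag)
next
  fix i j :: nat assume "i < j" then show "AC t i j = 0" by (rule AC_up)
qed

lemma evp_X2 [simp]: "evp [:0,0,1:] x = x^2"
  by (simp add: evp_def map_poly_pCons power2_eq_square)

definition ACp :: "nat \<Rightarrow> nat \<Rightarrow> int poly" where
  "ACp k j = hP [:0,0,1:] (2 * int j - int k) (int k - int j + 1) (int k - int j + 1)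
     + [:0,1:] * hP [:0,0,1:] (2 * int j - int k - 1) (int k - int j + 1) (int k - int j + 1)"

lemma evp_pCons0 [simp]: "evp (pCons 0 p) x = x * evp p x"
  by (simp add: evp_def map_poly_pCons)

lemma evp_ACp: "evp (ACp k j) x = AC x k j"
  by (simp add: ACp_def evp_hP AC_def cpol_def hsym_def power2_eq_square)

definition Qf :: "nat \<Rightarrow> nat \<Rightarrow> int poly" where
  "Qf m j = (if j < m then (-1) ^ j * trinv ACp m (m - j) else 0)"

lemma evp_Qf: "1 \<le> k \<Longrightarrow> k \<le> m \<Longrightarrow> evp (Qf m (m - k)) x = (-1) ^ (m - k) * trinv (AC x) m k"
  by (simp add: Qf_def evp_trinv evp_ACp)

lemma Dg_AC: "0 < t \<Longrightarrow> t \<noteq> 1 \<Longrightarrow> k \<le> m \<Longrightarrow>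
    Dg (AC t) k m = (\<Prod>i=0..m-k. 1 - t ^ (2*(m-i)+1)) / (1 - t) ^ (m - k + 1)"
proof -
  assume t: "0 < t" "t \<noteq> 1" and km: "k \<le> m"
  have "Dg (AC t) k m = (\<Prod>i\<in>{k..m}. (1 - t ^ (2*i+1)) / (1 - t))"
    unfolding Dg_def using t by (simp add: AC_diag qint_def)
  also have "\<dots> = (\<Prod>i\<in>{k..m}. 1 - t ^ (2*i+1)) / (1 - t) ^ (m - k + 1)"
    using km by (simp add: prod_dividef Suc_diff_le)
  also have "(\<Prod>i\<in>{k..m}. 1 - t ^ (2*i+1)) = (\<Prod>i=0..m-k. 1 - t ^ (2*(m-i)+1))"
    using km by (rule prod_rev)
  finally show ?thesis .
qed

context sfix begin

lemma K_conv: "(1 - s ^ (2*n+1)) / (1 - s) = s ^ n * KK s n"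
proof -
  define t where "t = 1/s"
  define x where "x = s ^ n"
  define y where "y = t ^ n"
  have st: "s * t = 1" "x * y = 1" using st1 unfolding t_def x_def y_def by auto
  have d: "s - t \<noteq> 0" "1 - s \<noteq> 0" using s_ne sne1 unfolding t_def by auto
  have K: "KK s n = ((s*x - t*y) + (x - y)) / (s - t)"
    unfolding KK_def Lsx Lt[of n] t_def[symmetric] x_def[symmetric] y_def[symmetric] by (simp add: add_divide_distrib)
  have p: "s ^ (2*n+1) = s * x * x" by (simp add: x_def power_add power_mult power2_eq_square mult_ac)
  have alg: "(1 - s*x*x) * (s - t) = (x * ((s*x - t*y) + (x - y))) * (1 - s)" using st by algebra
  have "(1 - s*x*x) / (1 - s) = (x * ((s*x - t*y) + (x - y))) / (s - t)"
    using alg d by (simp add: frac_eq_eq)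
  then show ?thesis unfolding p K x_def[symmetric] by simp
qed

lemma KK_pos: "1 \<le> n \<Longrightarrow> KK s n > 0"
  unfolding KK_def using L_pos[of n] L_pos[of "Suc n"] by simp

end

context sfix begin

lemma Ssum_even:
  assumes m1: "1 \<le> m"
  shows "Ssum (2*m) n (s^2) = s ^ ((2*m+1)*n) / (s * L s 2) * SQ s m n"
proof -
  obtain p where p: "m = Suc p" using m1 by (cases m) auto
  have sq: "sqrt (s^2) = s" using spos by simp
  have t: "qint (s^2) (2*i) / qint (s^2) 2 * qint (s^2) i ^ (2*p+1) * s ^ ((2*m+1)*(n-i))
      = s ^ ((2*m+1)*n) / (s * L s 2) * (L s (2*i) * (L s i ^ 2 / s ^ 2) ^ m / L s i)"
    if i: "i \<in> {1..n}" for i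
  proof -
    obtain d where d: "n = i + d" using i by (metis atLeastAtMost_iff le_Suc_ex)
    have Li: "L s i \<noteq> 0" using L_pos[of i] i by simp
    have e: "s ^ (2*i) * (s ^ i) ^ (2*p+1) * s ^ ((2*m+1)*(n-i)) = s ^ ((2*m+1)*n)"
    proof -
      have nd: "n - i = d" using d by simp
      have "s ^ (2*i) * (s ^ i) ^ (2*p+1) * s ^ ((2*m+1)*(n-i)) = s ^ (2*i + i*(2*p+1) + (2*m+1)*d)"
      proof -
        have pm: "(s ^ i) ^ (2*p+1) = s ^ (i*(2*p+1))" by (rule power_mult[symmetric])
        show ?thesis unfolding nd pm by (simp only: power_add[symmetric])
      qed
      also have "2*i + i*(2*p+1) + (2*m+1)*d = (2*m+1)*n" by (simp add: d p algebra_simps)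
      finally show ?thesis .
    qed
    have "qint (s^2) (2*i) / qint (s^2) 2 * qint (s^2) i ^ (2*p+1) * s ^ ((2*m+1)*(n-i))
        = (s ^ (2*i) * L s (2*i) / s) / (s ^ 2 * L s 2 / s) * (s ^ i * L s i / s) ^ (2*p+1) * s ^ ((2*m+1)*(n-i))"
      by (simp only: qL')
    also have "\<dots> = L s (2*i) * L s i ^ (2*p+1) / (L s 2 * s ^ 2 * s ^ (2*p+1)) *
        (s ^ (2*i) * (s ^ i) ^ (2*p+1) * s ^ ((2*m+1)*(n-i)))"
      using s_ne L2_nz by (simp add: field_simps power_mult_distrib power_divide)
    also have "\<dots> = s ^ ((2*m+1)*n) / (s * L s 2) * (L s (2*i) * (L s i ^ 2 / s ^ 2) ^ m / L s i)"
      unfolding e unfolding p using s_ne L2_nz Li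
      by (simp add: field_simps power_mult power_divide power2_eq_square power_mult_distrib)
    finally show ?thesis .
  qed
  have "Ssum (2*m) n (s^2) = (\<Sum>i=1..n. qint (s^2) (2*i) / qint (s^2) 2 * qint (s^2) i ^ (2*p+1) * s ^ ((2*m+1)*(n-i)))"
    unfolding Ssum_def sq by (simp add: p mult.commute)
  also have "\<dots> = (\<Sum>i=1..n. s ^ ((2*m+1)*n) / (s * L s 2) * (L s (2*i) * (L s i ^ 2 / s ^ 2) ^ m / L s i))"
    using t by (rule sum.cong[OF refl])
  also have "\<dots> = s ^ ((2*m+1)*n) / (s * L s 2) * SQ s m n"
    by (simp add: SQ_def sum_distrib_left)
  finally show ?thesis .
qed

lemma term_Q:
  assumes "k \<le> m"
  shows "(1 - s ^ (2*n+1)) * ((- ((s^2) ^ n)) ^ (m - k) * (1 - s) ^ (m - k) * e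
            / (\<Prod>i=0..m-k. 1 - s ^ (2*(m-i)+1)) * (qint (s^2) n * qint (s^2) (n+1)) ^ k / qint (s^2) 2)
     = s ^ ((2*m+1)*n) / (s * L s 2) * (KK s n * ((-1) ^ (m-k) * (1 - s) ^ (m - k + 1)
            / (\<Prod>i=0..m-k. 1 - s ^ (2*(m-i)+1)) * e * V s n ^ k / s ^ k))"
proof -
  define A where "A = (- ((s^2) ^ n)) ^ (m - k)"
  define U where "U = (qint (s^2) n * qint (s^2) (n+1)) ^ k"
  define P where "P = (\<Prod>i=0..m-k. 1 - s ^ (2*(m-i)+1))"
  have sg: "((-1::real) ^ (m-k)) * (-1) ^ (m-k) = 1" by (simp flip: power_add)
  have G: "A * U = (-1) ^ (m-k) * (s ^ (2*m*n) * (V s n ^ k / s ^ k))"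
  proof -
    have "A * (-1) ^ (m-k) * U = s ^ (2*m*n) * (V s n ^ k / s ^ k)"
      unfolding A_def U_def by (rule term_G[OF assms])
    then have "(-1) ^ (m-k) * (A * (-1) ^ (m-k) * U) = (-1) ^ (m-k) * (s ^ (2*m*n) * (V s n ^ k / s ^ k))"
      by simp
    then show ?thesis using sg by (simp add: mult_ac)
  qed
  have KC: "1 - s ^ (2*n+1) = (1 - s) * (s ^ n * KK s n)"
    using K_conv[of n] sne1 by (simp add: field_simps)
  have q2: "qint (s^2) 2 = s * L s 2" using qL'[of 2] s_ne by (simp add: power2_eq_square)
  have "(1 - s ^ (2*n+1)) * (A * (1 - s) ^ (m - k) * e / P * U / qint (s^2) 2)
      = s ^ n * KK s n * ((1 - s) * (1 - s) ^ (m - k)) * e / P * (A * U) / (s * L s 2)"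
    unfolding KC q2 by (simp add: divide_inverse mult_ac)
  also have "\<dots> = s ^ ((2*m+1)*n) / (s * L s 2) * (KK s n * ((-1) ^ (m-k) * (1 - s) ^ (m - k + 1)
            / P * e * V s n ^ k / s ^ k))"
  proof -
    have ex: "(2*m+1)*n = n + 2*m*n" by (simp add: algebra_simps)
    have e1: "s ^ n * s ^ (2*m*n) = s ^ ((2*m+1)*n)" unfolding ex power_add ..
    show ?thesis unfolding G e1[symmetric] by (simp add: divide_inverse mult_ac)
  qed
  finally show ?thesis unfolding A_def U_def P_def .
qed

end

lemma pow_ne1: "0 < t \<Longrightarrow> t \<noteq> 1 \<Longrightarrow> 1 \<le> j \<Longrightarrow> 1 - t ^ j \<noteq> (0::real)"
  using qint_pos[of t j] by (auto simp: qint_def)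

lemma PQ_nz: "0 < t \<Longrightarrow> t \<noteq> 1 \<Longrightarrow> (\<Prod>i=0..j. 1 - t ^ (2*(m-i)+1)) \<noteq> (0::real)"
proof
  assume t: "0 < t" "t \<noteq> 1" and P: "(\<Prod>i=0..j. 1 - t ^ (2*(m-i)+1)) = 0"
  then obtain i where "1 - t ^ (2*(m-i)+1) = 0"
    using prod_zero_iff[of "{0..j}" "\<lambda>i. 1 - t ^ (2*(m-i)+1)"] by auto
  moreover have "1 - t ^ (2*(m-i)+1) \<noteq> 0" by (rule pow_ne1[OF t]) simp
  ultimately show False by simp
qed

context sfix begin

lemma Q_ident:
  assumes m1: "1 \<le> m"
  shows "Ssum (2*m) n (s^2) = (1 - s ^ (2*n+1)) * (\<Sum>k=0..m. (- ((s^2) ^ n)) ^ (m - k) * (1 - s) ^ (m - k)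
      * evp (Qf m (m - k)) s / (\<Prod>i=0..m-k. 1 - s ^ (2*(m-i)+1)) * (qint (s^2) n * qint (s^2) (n+1)) ^ k / qint (s^2) 2)"
proof -
  define A where "A = AC s"
  define C where "C = s ^ ((2*m+1)*n) / (s * L s 2)"
  interpret lowtri A 1 m unfolding A_def using lowtri_AC[OF spos sne1] .
  have X: "KK s n * V s n ^ k / s ^ k = (\<Sum>j=1..m. A k j * SQ s j n)" if k: "k \<in> {1..m}" for k
  proof -
    have "KK s n * V s n ^ k / s ^ k = (\<Sum>j\<le>k. A k j * SQ s j n)"
      using Q_sum[of k n] k s_ne by (simp add: A_def)
    also have "\<dots> = (\<Sum>j\<in>{1..k}. A k j * SQ s j n)"
    proof (intro sum.mono_neutral_right)
      show "\<forall>i\<in>{..k} - {1..k}. A k i * SQ s i n = 0" using k by (auto simp: A_def AC_k0 Suc_le_eq)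
    qed auto
    also have "\<dots> = (\<Sum>j=1..m. A k j * SQ s j n)"
      using k by (intro sum.mono_neutral_left) (auto simp: A_def AC_up)
    finally show ?thesis .
  qed
  have Y: "SQ s m n = (\<Sum>k=1..m. Bm A m k * (KK s n * V s n ^ k / s ^ k))"
    by (rule solve[OF X]) (use m1 in auto)
  have c: "(-1) ^ (m-k) * (1 - s) ^ (m - k + 1) / (\<Prod>i=0..m-k. 1 - s ^ (2*(m-i)+1)) * evp (Qf m (m - k)) s = Bm A m k"
    if k: "k \<in> {1..m}" for k
  proof -
    have km: "1 \<le> k" "k \<le> m" using k by auto
    have sg: "((-1::real) ^ (m-k)) * (-1) ^ (m-k) = 1" by (simp flip: power_add)
    have B: "Bm A m k = trinv A m k * (1 - s) ^ (m - k + 1) / (\<Prod>i=0..m-k. 1 - s ^ (2*(m-i)+1))"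
      using km by (simp add: Bm_def A_def Dg_AC[OF spos sne1 km(2)])
    have "(-1) ^ (m-k) * (1 - s) ^ (m - k + 1) / (\<Prod>i=0..m-k. 1 - s ^ (2*(m-i)+1)) * evp (Qf m (m - k)) s
        = ((-1) ^ (m-k) * (-1) ^ (m-k)) * trinv A m k * (1 - s) ^ (m - k + 1) / (\<Prod>i=0..m-k. 1 - s ^ (2*(m-i)+1))"
      unfolding evp_Qf[OF km, of s] A_def by (simp add: divide_inverse mult_ac)
    then show ?thesis unfolding sg B by simp
  qed
  have "(1 - s ^ (2*n+1)) * (\<Sum>k=0..m. (- ((s^2) ^ n)) ^ (m - k) * (1 - s) ^ (m - k)
      * evp (Qf m (m - k)) s / (\<Prod>i=0..m-k. 1 - s ^ (2*(m-i)+1)) * (qint (s^2) n * qint (s^2) (n+1)) ^ k / qint (s^2) 2)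
      = (\<Sum>k=0..m. C * (KK s n * ((-1) ^ (m-k) * (1 - s) ^ (m - k + 1)
            / (\<Prod>i=0..m-k. 1 - s ^ (2*(m-i)+1)) * evp (Qf m (m - k)) s * V s n ^ k / s ^ k)))"
    unfolding sum_distrib_left C_def by (intro sum.cong refl term_Q) simp
  also have "\<dots> = (\<Sum>k=1..m. C * (KK s n * ((-1) ^ (m-k) * (1 - s) ^ (m - k + 1)
            / (\<Prod>i=0..m-k. 1 - s ^ (2*(m-i)+1)) * evp (Qf m (m - k)) s * V s n ^ k / s ^ k)))"
  proof -
    have "{0..m} = insert 0 {1..m}" by auto
    moreover have "evp (Qf m m) s = 0" by (simp add: Qf_def)
    ultimately show ?thesis by simp
  qed
  also have "\<dots> = (\<Sum>k=1..m. C * (Bm A m k * (KK s n * V s n ^ k / s ^ k)))"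
  proof (rule sum.cong[OF refl])
    fix k assume k: "k \<in> {1..m}"
    show "C * (KK s n * ((-1) ^ (m-k) * (1 - s) ^ (m - k + 1)
            / (\<Prod>i=0..m-k. 1 - s ^ (2*(m-i)+1)) * evp (Qf m (m - k)) s * V s n ^ k / s ^ k))
        = C * (Bm A m k * (KK s n * V s n ^ k / s ^ k))"
      unfolding c[OF k, symmetric] by (simp add: divide_inverse mult_ac)
  qed
  also have "\<dots> = C * SQ s m n" unfolding Y sum_distrib_left ..
  also have "\<dots> = Ssum (2*m) n (s^2)" unfolding C_def using Ssum_even[OF m1] by simp
  finally show ?thesis by simp
qed

lemma Q_uniq:
  assumes m1: "1 \<le> m"
  and H: "\<And>n. 1 \<le> n \<Longrightarrow> Ssum (2*m) n (s^2) = (1 - s ^ (2*n+1)) * (\<Sum>k=0..m. (- ((s^2) ^ n)) ^ (m - k) * (1 - s) ^ (m - k)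
      * evp (f (m - k)) s / (\<Prod>i=0..m-k. 1 - s ^ (2*(m-i)+1)) * (qint (s^2) n * qint (s^2) (n+1)) ^ k / qint (s^2) 2)"
  and k: "k \<le> m"
  shows "evp (f (m - k)) s = evp (Qf m (m - k)) s"
proof -
  define w where "w k = (-1) ^ (m-k) * (1 - s) ^ (m - k + 1) / (\<Prod>i=0..m-k. 1 - s ^ (2*(m-i)+1))" for k
  define C where "C n = s ^ ((2*m+1)*n) / (s * L s 2) * KK s n" for n
  have T: "(1 - s ^ (2*n+1)) * (\<Sum>k=0..m. (- ((s^2) ^ n)) ^ (m - k) * (1 - s) ^ (m - k)
      * e k / (\<Prod>i=0..m-k. 1 - s ^ (2*(m-i)+1)) * (qint (s^2) n * qint (s^2) (n+1)) ^ k / qint (s^2) 2)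
      = C n * (\<Sum>k=0..m. w k * e k / s ^ k * V s n ^ k)" for e n
  proof -
    have "(1 - s ^ (2*n+1)) * (\<Sum>k=0..m. (- ((s^2) ^ n)) ^ (m - k) * (1 - s) ^ (m - k)
      * e k / (\<Prod>i=0..m-k. 1 - s ^ (2*(m-i)+1)) * (qint (s^2) n * qint (s^2) (n+1)) ^ k / qint (s^2) 2)
      = (\<Sum>k=0..m. s ^ ((2*m+1)*n) / (s * L s 2) * (KK s n * ((-1) ^ (m-k) * (1 - s) ^ (m - k + 1)
            / (\<Prod>i=0..m-k. 1 - s ^ (2*(m-i)+1)) * e k * V s n ^ k / s ^ k)))"
      unfolding sum_distrib_left by (intro sum.cong refl term_Q) simp
    also have "\<dots> = C n * (\<Sum>k=0..m. w k * e k / s ^ k * V s n ^ k)"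
      unfolding sum_distrib_left C_def w_def by (intro sum.cong refl) (simp add: divide_inverse mult_ac)
    finally show ?thesis .
  qed
  define c where "c k = w k * (evp (f (m - k)) s - evp (Qf m (m - k)) s) / s ^ k" for k
  have "(\<Sum>k=0..m. c k * V s n ^ (k + 0)) = 0" if n: "1 \<le> n" for n
  proof -
    have C0: "C n \<noteq> 0" using s_ne L2_nz KK_pos[OF n] by (simp add: C_def)
    have "C n * (\<Sum>k=0..m. c k * V s n ^ (k + 0))
        = C n * (\<Sum>k=0..m. w k * evp (f (m - k)) s / s ^ k * V s n ^ k)
          - C n * (\<Sum>k=0..m. w k * evp (Qf m (m - k)) s / s ^ k * V s n ^ k)"
      by (simp add: c_def sum_distrib_left sum_subtractf[symmetric] algebra_simps diff_divide_distrib)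
    also have "\<dots> = Ssum (2*m) n (s^2) - Ssum (2*m) n (s^2)"
    proof -
      have a1: "C n * (\<Sum>k=0..m. w k * evp (f (m - k)) s / s ^ k * V s n ^ k) = Ssum (2*m) n (s^2)"
        unfolding H[OF n] T ..
      have a2: "C n * (\<Sum>k=0..m. w k * evp (Qf m (m - k)) s / s ^ k * V s n ^ k) = Ssum (2*m) n (s^2)"
        unfolding Q_ident[OF m1] T ..
      show ?thesis unfolding a1 a2 ..
    qed
    finally have "C n * (\<Sum>k=0..m. c k * V s n ^ (k + 0)) = 0" by simp
    then show ?thesis using C0 by (simp only: mult_eq_0_iff) blast
  qed
  then have "c k = 0" using zero_coeffs[where c = c and off = 0 and m = m and k = k] k by blast
  moreover have "w k \<noteq> 0"
  proof
    assume "w k = 0"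
    then have "(-1::real) ^ (m-k) * (1 - s) ^ (m - k + 1) = 0 \<or> (\<Prod>i=0..m-k. 1 - s ^ (2*(m-i)+1)) = 0"
      by (simp only: w_def divide_eq_0_iff)
    then show False using PQ_nz[OF spos sne1] sne1 by simp
  qed
  ultimately show ?thesis using s_ne by (simp add: c_def)
qed

end

lemma sqrt_sq_pos: "0 < t \<Longrightarrow> sqrt (t^2) = (t::real)" by simp

lemma Qfam_eq: "1 \<le> m \<Longrightarrow> Qfam m = Qf m"
  unfolding Qfam_def
proof (rule the_equality)
  assume m1: "1 \<le> m"
  show "(\<forall>j>m. Qf m j = 0) \<and> (\<forall>n\<ge>1. \<forall>q::real. 0 < q \<and> q \<noteq> 1 \<longrightarrow>
        Ssum (2*m) n q = (1 - sqrt q ^ (2*n+1)) *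
          (\<Sum>k=0..m. (- (q ^ n)) ^ (m - k) * (1 - sqrt q) ^ (m - k) * evp (Qf m (m - k)) (sqrt q)
             / (\<Prod>i=0..m-k. 1 - sqrt q ^ (2*(m-i)+1))
             * (qint q n * qint q (n+1)) ^ k / qint q 2))"
  proof (intro conjI allI impI)
    fix j assume "j > m" then show "Qf m j = 0" by (simp add: Qf_def)
  next
    fix n :: nat and q :: real assume "1 \<le> n" "0 < q \<and> q \<noteq> 1"
    then interpret sfix "sqrt q" using sfix_sqrt by auto
    show "Ssum (2*m) n q = (1 - sqrt q ^ (2*n+1)) *
          (\<Sum>k=0..m. (- (q ^ n)) ^ (m - k) * (1 - sqrt q) ^ (m - k) * evp (Qf m (m - k)) (sqrt q)
             / (\<Prod>i=0..m-k. 1 - sqrt q ^ (2*(m-i)+1))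
             * (qint q n * qint q (n+1)) ^ k / qint q 2)"
      using Q_ident[OF m1, of n] \<open>0 < q \<and> q \<noteq> 1\<close> by simp
  qed
next
  fix f assume m1: "1 \<le> m" and H: "(\<forall>j>m. f j = 0) \<and> (\<forall>n\<ge>1. \<forall>q::real. 0 < q \<and> q \<noteq> 1 \<longrightarrow>
        Ssum (2*m) n q = (1 - sqrt q ^ (2*n+1)) *
          (\<Sum>k=0..m. (- (q ^ n)) ^ (m - k) * (1 - sqrt q) ^ (m - k) * evp (f (m - k)) (sqrt q)
             / (\<Prod>i=0..m-k. 1 - sqrt q ^ (2*(m-i)+1))
             * (qint q n * qint q (n+1)) ^ k / qint q 2))"
  show "f = Qf m"
  proof
    fix j
    show "f j = Qf m j"
    proof (cases "j \<le> m")
      case False then show ?thesis using H by (simp add: Qf_def)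
    next
      case True
      show ?thesis
      proof (rule evp_inj[OF inf_q])
        fix t :: real assume t: "t \<in> {q. 0 < q \<and> q \<noteq> 1}"
        then interpret sfix t by unfold_locales auto
        have t2: "0 < t^2" "t^2 \<noteq> 1" using t s_ne by auto
        have "evp (f (m - (m - j))) t = evp (Qf m (m - (m - j))) t"
        proof (rule Q_uniq[OF m1])
          fix n :: nat assume n: "1 \<le> n"
          show "Ssum (2*m) n (t^2) = (1 - t ^ (2*n+1)) * (\<Sum>k=0..m. (- ((t^2) ^ n)) ^ (m - k) * (1 - t) ^ (m - k)
            * evp (f (m - k)) t / (\<Prod>i=0..m-k. 1 - t ^ (2*(m-i)+1)) * (qint (t^2) n * qint (t^2) (n+1)) ^ k / qint (t^2) 2)"
            using H n t2 sqrt_sq_pos[of t] t by auto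
        qed simp
        then show "evp (f j) t = evp (Qf m j) t" using True by simp
      qed
    qed
  qed
qed

lemma thm_Q:
  assumes "0 < q" "q \<noteq> 1"
  shows "inverse_on 1 n
      (\<lambda>k m. cpol (int k) (int m) q)
      (\<lambda>k m. if m \<le> k then (-1) ^ (k - m) * (1 - q) ^ (k - m + 1) * evp (Qpol k (k - m)) q
                 / (\<Prod>i=0..k-m. 1 - q ^ (2*k - 2*i + 1))
             else 0)"
proof -
  have A: "(\<lambda>k m. cpol (int k) (int m) q) = AC q" by (simp add: AC_def[abs_def])
  show ?thesis unfolding A
  proof (rule inverse_onI'[OF lowtri_AC[OF assms]])
    fix k m :: nat assume k: "k \<in> {1..n}" and m: "m \<in> {1..n}"
    show "(if m \<le> k then (-1) ^ (k - m) * (1 - q) ^ (k - m + 1) * evp (Qpol k (k - m)) q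
                 / (\<Prod>i=0..k-m. 1 - q ^ (2*k - 2*i + 1)) else 0)
        = Bm (AC q) k m"
    proof (cases "m \<le> k")
      case True
      have km: "1 \<le> m" "m \<le> k" "1 \<le> k" using k m True by auto
      have sg: "(-1::real) ^ (k - m) * (-1) ^ (k - m) = 1" by (simp flip: power_add)
      have P: "(\<Prod>i=0..k-m. 1 - q ^ (2*k - 2*i + 1)) = (\<Prod>i=0..k-m. 1 - q ^ (2*(k-i)+1))"
        by (intro prod.cong refl) (simp add: diff_mult_distrib2)
      have B: "Bm (AC q) k m = trinv (AC q) k m * (1 - q) ^ (k - m + 1) / (\<Prod>i=0..k-m. 1 - q ^ (2*(k-i)+1))"
        using True by (simp add: Bm_def Dg_AC[OF assms True])
      have "(-1) ^ (k - m) * (1 - q) ^ (k - m + 1) * evp (Qpol k (k - m)) q / (\<Prod>i=0..k-m. 1 - q ^ (2*(k-i)+1))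
          = ((-1) ^ (k - m) * (-1) ^ (k - m)) * trinv (AC q) k m * (1 - q) ^ (k - m + 1) / (\<Prod>i=0..k-m. 1 - q ^ (2*(k-i)+1))"
        unfolding Qpol_def Qfam_eq[OF km(3)] evp_Qf[OF km(1,2)] by (simp add: divide_inverse mult_ac)
      then show ?thesis using True unfolding P sg B by simp
    qed (simp add: Bm_def)
  qed
qed


definition AD :: "real \<Rightarrow> nat \<Rightarrow> nat \<Rightarrow> real" where
  "AD t k j = dpol (int k) (int j) t"

definition SH :: "real \<Rightarrow> nat \<Rightarrow> nat \<Rightarrow> real" where
  "SH s j n = (\<Sum>i=1..n. (-1) ^ (n - i) * ((L s i ^ 2 / s ^ 2) ^ j / L s i))"

lemma AD_AG: "1 \<le> k \<Longrightarrow> AD t k j = AG (t^2) k j + t * (if 1 \<le> j then AG (t^2) (k-1) (j-1) else 0)"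
  by (cases "j = 0") (auto simp: AD_def dpol_def AG_def gpol_def hh_neg of_nat_diff algebra_simps)

lemma AD_up: "k < j \<Longrightarrow> AD t k j = 0"
  by (simp add: AD_def dpol_def gpol_def hh_neg)

lemma AD_k0: "1 \<le> k \<Longrightarrow> AD t k 0 = 0"
  by (simp add: AD_def dpol_def gpol_def hh_neg)

lemma AD_diag: "1 \<le> i \<Longrightarrow> AD t i i = (1 + t) * (1 + t ^ (2*i - 1))"
proof -
  assume i: "1 \<le> i"
  obtain p where p: "i = Suc p" using i by (cases i) auto
  have "AD t i i = AG (t^2) i i + t * AG (t^2) p p" using AD_AG[OF i, of t i] p by simp
  also have "\<dots> = 1 + (t^2) ^ Suc p + t * (1 + (t^2) ^ p)" by (simp add: AG_diag p)
  also have "\<dots> = (1 + t) * (1 + t ^ (2*i - 1))"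
    by (simp add: p power_mult algebra_simps power2_eq_square power_mult_distrib)
  finally show ?thesis .
qed

lemma lowtri_AD: "0 < t \<Longrightarrow> lowtri (AD t) 1 hi"
proof
  fix i :: nat assume "0 < t" "1 \<le> i" "i \<le> hi"
  then show "AD t i i \<noteq> 0" by (simp add: AD_diag add_pos_pos less_imp_neq[symmetric])
next
  fix i j :: nat assume "i < j" then show "AD t i j = 0" by (rule AD_up)
qed

definition ADp :: "nat \<Rightarrow> nat \<Rightarrow> int poly" where
  "ADp k j = hP [:0,0,1:] (2 * int j - int k) (int k - int j + 1) (int k - int j)
     + hP [:0,0,1:] (2 * int j - int k) (int k - int j) (int k - int j + 1)
     + [:0,1:] * (hP [:0,0,1:] (2 * int j - int k - 1) (int k - int j + 1) (int k - int j)
       + hP [:0,0,1:] (2 * int j - int k - 1) (int k - int j) (int k - int j + 1))"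

lemma evp_ADp: "evp (ADp k j) x = AD x k j"
  by (simp add: ADp_def evp_hP AD_def dpol_def gpol_def power2_eq_square algebra_simps)

definition Hf :: "nat \<Rightarrow> nat \<Rightarrow> int poly" where
  "Hf m j = (if j < m then (-1) ^ j * trinv ADp m (m - j) else 0)"

lemma evp_Hf: "1 \<le> k \<Longrightarrow> k \<le> m \<Longrightarrow> evp (Hf m (m - k)) x = (-1) ^ (m - k) * trinv (AD x) m k"
  by (simp add: Hf_def evp_trinv evp_ADp)

lemma Dg_AD: "1 \<le> k \<Longrightarrow> k \<le> m \<Longrightarrow>
    Dg (AD t) k m = (1 + t) ^ (m - k + 1) * (\<Prod>i=0..m-k. 1 + t ^ (2*(m-i) - 1))"
proof -
  assume k: "1 \<le> k" and km: "k \<le> m"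
  have "Dg (AD t) k m = (\<Prod>i\<in>{k..m}. (1 + t) * (1 + t ^ (2*i - 1)))"
    unfolding Dg_def using k by (intro prod.cong refl) (simp add: AD_diag)
  also have "\<dots> = (1 + t) ^ (m - k + 1) * (\<Prod>i\<in>{k..m}. 1 + t ^ (2*i - 1))"
    using km by (simp add: prod.distrib Suc_diff_le)
  also have "(\<Prod>i\<in>{k..m}. 1 + t ^ (2*i - 1)) = (\<Prod>i=0..m-k. 1 + t ^ (2*(m-i) - 1))"
    using km by (rule prod_rev)
  finally show ?thesis .
qed

context sfix begin

lemma H_tele:
  assumes k: "1 \<le> k"
  shows "KK s (Suc n) * V s (Suc n) ^ (k-1) + KK s n * V s n ^ (k-1)
     = s ^ k * (\<Sum>j\<le>k. AD s k j * ((L s (Suc n) ^ 2 / s ^ 2) ^ j / L s (Suc n)))"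
proof -
  obtain p where p: "k = Suc p" using k by (cases k) auto
  define a where "a = L s (Suc (Suc n))"
  define b where "b = L s n"
  define y where "y = L s (Suc n)"
  define z where "z = y ^ 2 / s ^ 2"
  have y0: "y \<noteq> 0" unfolding y_def using L_pos[of "Suc n"] by simp
  have sn: "s \<noteq> 0" using s_ne by simp
  have c1: "y ^ k * (a ^ k + b ^ k) = s ^ k * (\<Sum>j\<le>k. AG (s^2) k j * z ^ j)"
    unfolding y_def a_def b_def z_def by (rule G_core)
  have c2: "y ^ p * (a ^ p + b ^ p) = s ^ p * (\<Sum>j\<le>p. AG (s^2) p j * z ^ j)"
    unfolding y_def a_def b_def z_def by (rule G_core)
  have "KK s (Suc n) * V s (Suc n) ^ (k-1) + KK s n * V s n ^ (k-1)
      = (a + y) * (y * a) ^ p + (y + b) * (b * y) ^ p"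
    by (simp add: KK_def V_def a_def b_def y_def add.commute p)
  also have "\<dots> = 1 / y * (y ^ k * (a ^ k + b ^ k) + y ^ 2 * (y ^ p * (a ^ p + b ^ p)))"
    using y0 by (simp add: p power_mult_distrib field_simps power2_eq_square)
  also have "\<dots> = 1 / y * (s ^ k * (\<Sum>j\<le>k. AG (s^2) k j * z ^ j)
       + y ^ 2 * (s ^ p * (\<Sum>j\<le>p. AG (s^2) p j * z ^ j)))"
    unfolding c1 c2 ..
  also have "y ^ 2 * (s ^ p * (\<Sum>j\<le>p. AG (s^2) p j * z ^ j)) = s ^ k * (s * (z * (\<Sum>j\<le>p. AG (s^2) p j * z ^ j)))"
    using sn by (simp add: z_def p field_simps power2_eq_square)
  also have "s * (z * (\<Sum>j\<le>p. AG (s^2) p j * z ^ j)) = (\<Sum>j\<le>k. s * (if 1 \<le> j then AG (s^2) p (j - 1) else 0) * z ^ j)"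
    unfolding shift_z p by (simp add: sum_distrib_left distrib_left mult_ac)
  also have "s ^ k * (\<Sum>j\<le>k. AG (s^2) k j * z ^ j) + s ^ k * (\<Sum>j\<le>k. s * (if 1 \<le> j then AG (s^2) p (j - 1) else 0) * z ^ j)
      = s ^ k * (\<Sum>j\<le>k. AD s k j * z ^ j)"
  proof -
    have e: "AD s k j = AG (s^2) k j + s * (if 1 \<le> j then AG (s^2) p (j-1) else 0)" for j
      using AD_AG[OF k, of s j] p by simp
    show ?thesis unfolding e distrib_right sum.distrib distrib_left by (simp add: mult_ac)
  qed
  also have "1 / y * (s ^ k * (\<Sum>j\<le>k. AD s k j * z ^ j))
      = s ^ k * (\<Sum>j\<le>k. AD s k j * (z ^ j / y))"
    by (simp add: sum_distrib_left sum_divide_distrib mult_ac)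
  finally show ?thesis unfolding z_def y_def .
qed

lemma H_sum: "1 \<le> k \<Longrightarrow> KK s n * V s n ^ (k-1) - (-1) ^ n * (if k = 1 then 1 else 0)
     = s ^ k * (\<Sum>j\<le>k. AD s k j * SH s j n)"
proof (induction n)
  case 0
  then show ?case by (simp add: V_def SH_def KK_def)
next
  case (Suc n)
  have "KK s (Suc n) * V s (Suc n) ^ (k-1) - (-1) ^ Suc n * (if k = 1 then 1 else 0)
      = - (KK s n * V s n ^ (k-1) - (-1) ^ n * (if k = 1 then 1 else 0))
        + s ^ k * (\<Sum>j\<le>k. AD s k j * ((L s (Suc n) ^ 2 / s ^ 2) ^ j / L s (Suc n)))"
    using H_tele[OF Suc.prems, of n] by (simp add: algebra_simps)
  also have "\<dots> = s ^ k * (\<Sum>j\<le>k. AD s k j * SH s j (Suc n))"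
    unfolding Suc.IH[OF Suc.prems] SH_def alt_Suc[where x="\<lambda>i. (L s i ^ 2 / s ^ 2) ^ _ / L s i"]
    by (simp add: sum_distrib_left sum_subtractf algebra_simps)
  finally show ?case .
qed

lemma Tsum_odd:
  assumes m1: "1 \<le> m"
  shows "Tsum (2*m-1) n (s^2) = s ^ ((2*m-1)*n) * s * SH s m n"
proof -
  obtain p where p: "m = Suc p" using m1 by (cases m) auto
  have sq: "sqrt (s^2) = s" using spos by simp
  have t: "(-1) ^ (n - i) * qint (s^2) i ^ (2*p+1) * s ^ ((2*p+1)*(n-i))
      = s ^ ((2*m-1)*n) * s * ((-1) ^ (n - i) * ((L s i ^ 2 / s ^ 2) ^ m / L s i))"
    if i: "i \<in> {1..n}" for i
  proof -
    obtain d where d: "n = i + d" using i by (metis atLeastAtMost_iff le_Suc_ex)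
    have Li: "L s i \<noteq> 0" using L_pos[of i] i by simp
    have e: "(s ^ i) ^ (2*p+1) * s ^ ((2*p+1)*(n-i)) = s ^ ((2*m-1)*n)"
    proof -
      have nd: "n - i = d" using d by simp
      have pm: "(s ^ i) ^ (2*p+1) = s ^ (i*(2*p+1))" by (rule power_mult[symmetric])
      have "(s ^ i) ^ (2*p+1) * s ^ ((2*p+1)*(n-i)) = s ^ (i*(2*p+1) + (2*p+1)*d)"
        unfolding nd pm by (simp only: power_add[symmetric])
      also have "i*(2*p+1) + (2*p+1)*d = (2*m-1)*n" by (simp add: d p algebra_simps)
      finally show ?thesis .
    qed
    have "(-1) ^ (n - i) * qint (s^2) i ^ (2*p+1) * s ^ ((2*p+1)*(n-i))
        = (-1) ^ (n - i) * (s ^ i * L s i / s) ^ (2*p+1) * s ^ ((2*p+1)*(n-i))"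
      by (simp only: qL')
    also have "\<dots> = (-1) ^ (n - i) * L s i ^ (2*p+1) / s ^ (2*p+1) * ((s ^ i) ^ (2*p+1) * s ^ ((2*p+1)*(n-i)))"
      using s_ne by (simp add: field_simps power_mult_distrib power_divide)
    also have "\<dots> = s ^ ((2*m-1)*n) * s * ((-1) ^ (n - i) * ((L s i ^ 2 / s ^ 2) ^ m / L s i))"
      unfolding e unfolding p using s_ne Li
      by (simp add: field_simps power_mult power_divide power2_eq_square power_mult_distrib)
    finally show ?thesis .
  qed
  have "Tsum (2*m-1) n (s^2) = (\<Sum>i=1..n. (-1) ^ (n - i) * qint (s^2) i ^ (2*p+1) * s ^ ((2*p+1)*(n-i)))"
    unfolding Tsum_def sq by (simp add: p)
  also have "\<dots> = (\<Sum>i=1..n. s ^ ((2*m-1)*n) * s * ((-1) ^ (n - i) * ((L s i ^ 2 / s ^ 2) ^ m / L s i)))"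
    using t by (rule sum.cong[OF refl])
  also have "\<dots> = s ^ ((2*m-1)*n) * s * SH s m n"
    by (simp add: SH_def sum_distrib_left)
  finally show ?thesis .
qed

lemma KK_sq: "KK s n ^ 2 = 1 + (s + 1/s + 2) * V s n"
proof -
  have a: "L s (Suc (Suc n)) * L s n = L s (Suc n) ^ 2 - 1" by (rule Lprod)
  have b: "L s (Suc (Suc n)) = (s + 1/s) * L s (Suc n) - L s n" using Lrec[of n] by simp
  have "L s (Suc n) ^ 2 + L s n ^ 2 = 1 + (s + 1/s) * (L s n * L s (Suc n))"
    using a unfolding b by (simp add: algebra_simps power2_eq_square)
  then show ?thesis unfolding KK_def V_def by (simp add: algebra_simps power2_eq_square)
qed

end

context sfix begin

lemma H_ident:
  assumes m1: "1 \<le> m"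
  shows "Tsum (2*m-1) n (s^2) =
    (-1) ^ (m + n) * evp (Hf m (m - 1)) s * s ^ ((2*m-1)*n)
      / ((1 + s) ^ m * (\<Prod>i=0..m-1. 1 + s ^ (2*(m-i)-1)))
    + (1 - s ^ (2*n+1)) / (1 - s) *
      (\<Sum>k=1..m. (- ((s^2) ^ n)) ^ (m - k) * evp (Hf m (m - k)) s
         * (qint (s^2) n * qint (s^2) (n+1)) ^ (k - 1)
         / ((1 + s) ^ (m - k + 1) * (\<Prod>i=0..m-k. 1 + s ^ (2*(m-i)-1))))"
proof -
  define A where "A = AD s"
  interpret lowtri A 1 m unfolding A_def using lowtri_AD[OF spos] .
  define X where "X k = (KK s n * V s n ^ (k-1) - (-1) ^ n * (if k = 1 then 1 else 0)) / s ^ k" for k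
  define D where "D k = (1 + s) ^ (m - k + 1) * (\<Prod>i=0..m-k. 1 + s ^ (2*(m-i)-1))" for k
  define E where "E = s ^ ((2*m-1)*n)"
  have Xe: "X k = (\<Sum>j=1..m. A k j * SH s j n)" if k: "k \<in> {1..m}" for k
  proof -
    have "X k = (\<Sum>j\<le>k. A k j * SH s j n)"
      using H_sum[of k n] k s_ne by (simp add: A_def X_def)
    also have "\<dots> = (\<Sum>j\<in>{1..k}. A k j * SH s j n)"
    proof (intro sum.mono_neutral_right)
      show "\<forall>i\<in>{..k} - {1..k}. A k i * SH s i n = 0" using k by (auto simp: A_def AD_k0 Suc_le_eq)
    qed auto
    also have "\<dots> = (\<Sum>j=1..m. A k j * SH s j n)"
      using k by (intro sum.mono_neutral_left) (auto simp: A_def AD_up)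
    finally show ?thesis .
  qed
  have Y: "SH s m n = (\<Sum>k=1..m. Bm A m k * X k)"
    by (rule solve[OF Xe]) (use m1 in auto)
  have c: "evp (Hf m (m - k)) s / D k = (-1) ^ (m-k) * Bm A m k" if k: "k \<in> {1..m}" for k
  proof -
    have km: "1 \<le> k" "k \<le> m" using k by auto
    have "D k \<noteq> 0"
    proof -
      have "(\<Prod>i=0..m-k. 1 + s ^ (2*(m-i)-1)) > 0"
        using spos by (intro prod_pos) (auto intro!: add_pos_nonneg zero_le_power)
      then show ?thesis unfolding D_def using spos by (simp add: less_imp_neq[symmetric])
    qed
    then show ?thesis using km evp_Hf[OF km, of s] Dg_AD[OF km, of s]
      by (simp add: Bm_def A_def D_def)
  qed
  have sgn: "((-1::real) ^ j) * (-1) ^ j = 1" for j by (simp flip: power_add)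
  have t1: "(-1) ^ (m + n) * evp (Hf m (m - 1)) s * E / ((1 + s) ^ m * (\<Prod>i=0..m-1. 1 + s ^ (2*(m-i)-1)))
      = - ((-1) ^ n * Bm A m 1 * E)"
  proof -
    obtain p where p: "m = Suc p" using m1 by (cases m) auto
    have "(1 + s) ^ m * (\<Prod>i=0..m-1. 1 + s ^ (2*(m-i)-1)) = D 1" by (simp add: D_def p)
    then have "(-1) ^ (m + n) * evp (Hf m (m - 1)) s * E / ((1 + s) ^ m * (\<Prod>i=0..m-1. 1 + s ^ (2*(m-i)-1)))
        = (-1) ^ (m + n) * (evp (Hf m (m - 1)) s / D 1) * E" by simp
    also have "\<dots> = ((-1) ^ (m + n) * (-1) ^ (m - 1)) * Bm A m 1 * E" using c[of 1] m1 by simp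
    also have "(-1::real) ^ (m + n) * (-1) ^ (m - 1) = - ((-1) ^ n)"
    proof -
      have "(-1::real) ^ (m + n) * (-1) ^ (m - 1) = (-1) ^ n * ((-1) ^ p * (-1) ^ p) * (-1)"
        by (simp add: p power_add mult_ac)
      then show ?thesis by (simp add: sgn)
    qed
    finally show ?thesis by simp
  qed
  have t2: "(- ((s^2) ^ n)) ^ (m - k) * evp (Hf m (m - k)) s * (qint (s^2) n * qint (s^2) (n+1)) ^ (k - 1)
         / ((1 + s) ^ (m - k + 1) * (\<Prod>i=0..m-k. 1 + s ^ (2*(m-i)-1)))
      = Bm A m k * (s ^ (2*(m-1)*n) * (V s n ^ (k-1) / s ^ (k-1)))" if k: "k \<in> {1..m}" for k
  proof -
    have km: "k - 1 \<le> m - 1" "m - 1 - (k - 1) = m - k" using k by auto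
    have tg: "(- ((s^2) ^ n)) ^ (m - k) * (-1) ^ (m - k) * (qint (s^2) n * qint (s^2) (n+1)) ^ (k - 1)
        = s ^ (2*(m-1)*n) * (V s n ^ (k-1) / s ^ (k-1))"
      using term_G[OF km(1), of n] unfolding km(2) .
    have "(- ((s^2) ^ n)) ^ (m - k) * evp (Hf m (m - k)) s * (qint (s^2) n * qint (s^2) (n+1)) ^ (k - 1)
         / ((1 + s) ^ (m - k + 1) * (\<Prod>i=0..m-k. 1 + s ^ (2*(m-i)-1)))
        = (evp (Hf m (m - k)) s / D k) * ((- ((s^2) ^ n)) ^ (m - k) * (qint (s^2) n * qint (s^2) (n+1)) ^ (k - 1))"
      by (simp add: D_def divide_inverse mult_ac)
    also have "\<dots> = Bm A m k * ((- ((s^2) ^ n)) ^ (m - k) * (-1) ^ (m - k) * (qint (s^2) n * qint (s^2) (n+1)) ^ (k - 1))"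
      unfolding c[OF k] by (simp add: mult_ac)
    finally show ?thesis unfolding tg .
  qed
  have KC: "(1 - s ^ (2*n+1)) / (1 - s) = s ^ n * KK s n" by (rule K_conv)
  have t3: "E * s * (Bm A m k * (KK s n * V s n ^ (k-1) / s ^ k))
      = s ^ n * KK s n * (Bm A m k * (s ^ (2*(m-1)*n) * (V s n ^ (k-1) / s ^ (k-1))))" if k: "k \<in> {1..m}" for k
  proof -
    obtain r where r: "k = Suc r" using k by (cases k) auto
    obtain p where p: "m = Suc p" using m1 by (cases m) auto
    have ex: "(2*m-1)*n = n + 2*(m-1)*n" by (simp add: p algebra_simps)
    have "E * s / s ^ k = s ^ n * s ^ (2*(m-1)*n) / s ^ (k-1)"
      unfolding E_def ex power_add r using s_ne by simp
    then show ?thesis by (simp add: divide_inverse mult_ac)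
  qed
  have "Tsum (2*m-1) n (s^2) = E * s * SH s m n" unfolding E_def by (rule Tsum_odd[OF m1])
  also have "\<dots> = E * s * (\<Sum>k=1..m. Bm A m k * (KK s n * V s n ^ (k-1) / s ^ k))
       - (-1) ^ n * Bm A m 1 * E"
  proof -
    have bx: "Bm A m k * X k = Bm A m k * (KK s n * V s n ^ (k-1) / s ^ k) - (if k = 1 then (-1) ^ n * Bm A m 1 / s else 0)" for k
      by (cases "k = 1") (simp_all add: X_def diff_divide_distrib right_diff_distrib mult_ac)
    have "(\<Sum>k=1..m. Bm A m k * X k) = (\<Sum>k=1..m. Bm A m k * (KK s n * V s n ^ (k-1) / s ^ k))
        - (\<Sum>k=1..m. (if k = 1 then (-1) ^ n * Bm A m 1 / s else 0))"
      unfolding bx by (rule sum_subtractf)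
    also have "(\<Sum>k=1..m. (if k = 1 then (-1) ^ n * Bm A m 1 / s else 0)) = (-1) ^ n * Bm A m 1 / s"
      using m1 by (simp add: sum.delta)
    finally show ?thesis unfolding Y using s_ne by (simp add: right_diff_distrib mult_ac)
  qed
  also have "\<dots> = (-1) ^ (m + n) * evp (Hf m (m - 1)) s * E / ((1 + s) ^ m * (\<Prod>i=0..m-1. 1 + s ^ (2*(m-i)-1)))
    + (1 - s ^ (2*n+1)) / (1 - s) *
      (\<Sum>k=1..m. (- ((s^2) ^ n)) ^ (m - k) * evp (Hf m (m - k)) s
         * (qint (s^2) n * qint (s^2) (n+1)) ^ (k - 1)
         / ((1 + s) ^ (m - k + 1) * (\<Prod>i=0..m-k. 1 + s ^ (2*(m-i)-1))))"
  proof -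
    have "(1 - s ^ (2*n+1)) / (1 - s) *
      (\<Sum>k=1..m. (- ((s^2) ^ n)) ^ (m - k) * evp (Hf m (m - k)) s
         * (qint (s^2) n * qint (s^2) (n+1)) ^ (k - 1)
         / ((1 + s) ^ (m - k + 1) * (\<Prod>i=0..m-k. 1 + s ^ (2*(m-i)-1))))
       = (\<Sum>k=1..m. s ^ n * KK s n * (Bm A m k * (s ^ (2*(m-1)*n) * (V s n ^ (k-1) / s ^ (k-1)))))"
      unfolding KC sum_distrib_left
    proof (rule sum.cong[OF refl])
      fix k assume k: "k \<in> {1..m}"
      show "s ^ n * KK s n * ((- ((s^2) ^ n)) ^ (m - k) * evp (Hf m (m - k)) s
         * (qint (s^2) n * qint (s^2) (n+1)) ^ (k - 1)
         / ((1 + s) ^ (m - k + 1) * (\<Prod>i=0..m-k. 1 + s ^ (2*(m-i)-1))))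
        = s ^ n * KK s n * (Bm A m k * (s ^ (2*(m-1)*n) * (V s n ^ (k-1) / s ^ (k-1))))"
        by (simp only: t2[OF k])
    qed
    also have "\<dots> = E * s * (\<Sum>k=1..m. Bm A m k * (KK s n * V s n ^ (k-1) / s ^ k))"
      unfolding sum_distrib_left
    proof (rule sum.cong[OF refl])
      fix k assume k: "k \<in> {1..m}"
      show "s ^ n * KK s n * (Bm A m k * (s ^ (2*(m-1)*n) * (V s n ^ (k-1) / s ^ (k-1))))
          = E * s * (Bm A m k * (KK s n * V s n ^ (k-1) / s ^ k))"
        by (simp only: t3[OF k])
    qed
    finally show ?thesis unfolding t1 by simp
  qed
  finally show ?thesis unfolding E_def .
qed

end

context sfix begin

lemma sq_uniq:
  assumes H: "\<And>n. 1 \<le> n \<Longrightarrow> (-1) ^ n * e0 + KK s n * (\<Sum>k\<le>M. c k * V s n ^ k) = 0"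
  and k: "k \<le> M"
  shows "c k = 0"
proof -
  define P where "P = (\<Sum>k\<le>M. monom (c k) k)"
  define cc where "cc = s + 1/s + 2"
  have cc: "cc \<noteq> 0" using spos unfolding cc_def by (simp add: add_pos_pos less_imp_neq[symmetric])
  define Q where "Q = [:1, cc:] * P ^ 2 - [:e0 ^ 2:]"
  have pP: "poly P x = (\<Sum>k\<le>M. c k * x ^ k)" for x by (simp add: P_def poly_sum poly_monom)
  have "V s ` {1..} \<subseteq> {x. poly Q x = 0}"
  proof
    fix x assume "x \<in> V s ` {1..}"
    then obtain n where n: "1 \<le> n" and x: "x = V s n" by auto
    have e: "KK s n * poly P x = - ((-1) ^ n * e0)" using H[OF n] unfolding pP x by simp
    have "(KK s n * poly P x) ^ 2 = e0 ^ 2" unfolding e by (simp add: power_mult_distrib power_even_eq flip: power_mult)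
    then have "(1 + cc * x) * poly P x ^ 2 = e0 ^ 2"
      unfolding power_mult_distrib KK_sq x cc_def by simp
    then show "x \<in> {x. poly Q x = 0}" by (simp add: Q_def algebra_simps)
  qed
  then have "infinite {x. poly Q x = 0}" using V_inf finite_subset by blast
  then have "Q = 0" using poly_roots_finite by blast
  then have eq: "[:1, cc:] * P ^ 2 = [:e0 ^ 2:]" by (simp add: Q_def)
  have "P = 0"
  proof (rule ccontr)
    assume P0: "P \<noteq> 0"
    have "degree ([:1, cc:] * P ^ 2) = degree [:1, cc:] + degree (P ^ 2)"
      by (rule degree_mult_eq) (use P0 in auto)
    also have "degree [:1, cc:] = 1" using cc by simp
    finally have "degree ([:1, cc:] * P ^ 2) \<ge> 1" by simp
    moreover have "degree [:e0 ^ 2:] = 0" by simp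
    ultimately show False using eq by simp
  qed
  then have "coeff P k = 0" by simp
  moreover have "coeff P k = c k" using k by (simp add: P_def coeff_sum)
  ultimately show ?thesis by simp
qed

end

context sfix begin

definition DD :: "nat \<Rightarrow> nat \<Rightarrow> real" where
  "DD m k = (1 + s) ^ (m - k + 1) * (\<Prod>i=0..m-k. 1 + s ^ (2*(m-i)-1))"

lemma DD_pos: "DD m k > 0"
proof -
  have "(\<Prod>i=0..m-k. 1 + s ^ (2*(m-i)-1)) > 0"
    using spos by (intro prod_pos) (auto intro!: add_pos_nonneg zero_le_power)
  then show ?thesis unfolding DD_def using spos by simp
qed

lemma R_form:
  assumes m1: "1 \<le> m"
  shows "(-1) ^ (m + n) * e 1 * s ^ ((2*m-1)*n)
      / ((1 + s) ^ m * (\<Prod>i=0..m-1. 1 + s ^ (2*(m-i)-1)))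
    + (1 - s ^ (2*n+1)) / (1 - s) *
      (\<Sum>k=1..m. (- ((s^2) ^ n)) ^ (m - k) * e k
         * (qint (s^2) n * qint (s^2) (n+1)) ^ (k - 1)
         / ((1 + s) ^ (m - k + 1) * (\<Prod>i=0..m-k. 1 + s ^ (2*(m-i)-1))))
    = s ^ ((2*m-1)*n) * ((-1) ^ n * ((-1) ^ m * e 1 / DD m 1)
        + KK s n * (\<Sum>k=1..m. (-1) ^ (m-k) * e k / DD m k / s ^ (k-1) * V s n ^ (k-1)))"
proof -
  obtain p where p: "m = Suc p" using m1 by (cases m) auto
  have sgn: "((-1::real) ^ j) * (-1) ^ j = 1" for j by (simp flip: power_add)
  have D1: "(1 + s) ^ m * (\<Prod>i=0..m-1. 1 + s ^ (2*(m-i)-1)) = DD m 1" by (simp add: DD_def p)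
  have ex: "s ^ ((2*m-1)*n) = s ^ n * s ^ (2*(m-1)*n)"
  proof -
    have "(2*m-1)*n = n + 2*(m-1)*n" by (simp add: p algebra_simps)
    then show ?thesis by (simp add: power_add)
  qed
  have tk: "(- ((s^2) ^ n)) ^ (m - k) * e k * (qint (s^2) n * qint (s^2) (n+1)) ^ (k - 1)
         / ((1 + s) ^ (m - k + 1) * (\<Prod>i=0..m-k. 1 + s ^ (2*(m-i)-1)))
      = s ^ (2*(m-1)*n) * ((-1) ^ (m-k) * e k / DD m k / s ^ (k-1) * V s n ^ (k-1))"
    if k: "k \<in> {1..m}" for k
  proof -
    have km: "k - 1 \<le> m - 1" "m - 1 - (k - 1) = m - k" using k by auto
    have tg: "(- ((s^2) ^ n)) ^ (m - k) * (-1) ^ (m - k) * (qint (s^2) n * qint (s^2) (n+1)) ^ (k - 1)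
        = s ^ (2*(m-1)*n) * (V s n ^ (k-1) / s ^ (k-1))"
      using term_G[OF km(1), of n] unfolding km(2) .
    have "(- ((s^2) ^ n)) ^ (m - k) * e k * (qint (s^2) n * qint (s^2) (n+1)) ^ (k - 1)
         / ((1 + s) ^ (m - k + 1) * (\<Prod>i=0..m-k. 1 + s ^ (2*(m-i)-1)))
        = ((-1) ^ (m-k) * e k / DD m k) * ((- ((s^2) ^ n)) ^ (m - k) * (-1) ^ (m - k) * (qint (s^2) n * qint (s^2) (n+1)) ^ (k - 1))"
    proof -
      have g: "a * e * u / d = ((x * x) * e / d) * a * u" if "x * x = 1" for a e u d x :: real
        using that by (simp add: divide_inverse mult_ac)
      show ?thesis unfolding DD_def by (subst g[OF sgn[of "m-k"]]) (simp add: divide_inverse mult_ac)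
    qed
    also have "\<dots> = s ^ (2*(m-1)*n) * ((-1) ^ (m-k) * e k / DD m k / s ^ (k-1) * V s n ^ (k-1))"
      unfolding tg by (simp add: divide_inverse mult_ac)
    finally show ?thesis .
  qed
  have "(1 - s ^ (2*n+1)) / (1 - s) *
      (\<Sum>k=1..m. (- ((s^2) ^ n)) ^ (m - k) * e k
         * (qint (s^2) n * qint (s^2) (n+1)) ^ (k - 1)
         / ((1 + s) ^ (m - k + 1) * (\<Prod>i=0..m-k. 1 + s ^ (2*(m-i)-1))))
      = s ^ n * KK s n * (\<Sum>k=1..m. s ^ (2*(m-1)*n) * ((-1) ^ (m-k) * e k / DD m k / s ^ (k-1) * V s n ^ (k-1)))"
  proof -
    have sT: "(\<Sum>k=1..m. (- ((s^2) ^ n)) ^ (m - k) * e k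
         * (qint (s^2) n * qint (s^2) (n+1)) ^ (k - 1)
         / ((1 + s) ^ (m - k + 1) * (\<Prod>i=0..m-k. 1 + s ^ (2*(m-i)-1))))
      = (\<Sum>k=1..m. s ^ (2*(m-1)*n) * ((-1) ^ (m-k) * e k / DD m k / s ^ (k-1) * V s n ^ (k-1)))"
      by (rule sum.cong[OF refl tk])
    show ?thesis unfolding K_conv sT ..
  qed
  also have "\<dots> = s ^ ((2*m-1)*n) * (KK s n * (\<Sum>k=1..m. (-1) ^ (m-k) * e k / DD m k / s ^ (k-1) * V s n ^ (k-1)))"
    unfolding ex by (simp only: sum_distrib_left[symmetric]) (simp only: mult_ac)
  finally have a2: "(1 - s ^ (2*n+1)) / (1 - s) *
      (\<Sum>k=1..m. (- ((s^2) ^ n)) ^ (m - k) * e k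
         * (qint (s^2) n * qint (s^2) (n+1)) ^ (k - 1)
         / ((1 + s) ^ (m - k + 1) * (\<Prod>i=0..m-k. 1 + s ^ (2*(m-i)-1))))
      = s ^ ((2*m-1)*n) * (KK s n * (\<Sum>k=1..m. (-1) ^ (m-k) * e k / DD m k / s ^ (k-1) * V s n ^ (k-1)))" .
  have a1: "(-1) ^ (m + n) * e 1 * s ^ ((2*m-1)*n) / ((1 + s) ^ m * (\<Prod>i=0..m-1. 1 + s ^ (2*(m-i)-1)))
      = s ^ ((2*m-1)*n) * ((-1) ^ n * ((-1) ^ m * e 1 / DD m 1))"
    unfolding D1 by (simp add: power_add divide_inverse mult_ac)
  show ?thesis unfolding a1 a2 by (simp add: distrib_left)
qed

lemma H_uniq:
  assumes m1: "1 \<le> m"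
  and H: "\<And>n. 1 \<le> n \<Longrightarrow> Tsum (2*m-1) n (s^2) =
    (-1) ^ (m + n) * evp (f (m - 1)) s * s ^ ((2*m-1)*n)
      / ((1 + s) ^ m * (\<Prod>i=0..m-1. 1 + s ^ (2*(m-i)-1)))
    + (1 - s ^ (2*n+1)) / (1 - s) *
      (\<Sum>k=1..m. (- ((s^2) ^ n)) ^ (m - k) * evp (f (m - k)) s
         * (qint (s^2) n * qint (s^2) (n+1)) ^ (k - 1)
         / ((1 + s) ^ (m - k + 1) * (\<Prod>i=0..m-k. 1 + s ^ (2*(m-i)-1))))"
  and k: "1 \<le> k" "k \<le> m"
  shows "evp (f (m - k)) s = evp (Hf m (m - k)) s"
proof -
  define d where "d k = evp (f (m - k)) s - evp (Hf m (m - k)) s" for k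
  define e0 where "e0 = (-1) ^ m * d 1 / DD m 1"
  define c where "c j = (-1) ^ (m - (j+1)) * d (j+1) / DD m (j+1) / s ^ j" for j
  have Z: "(-1) ^ n * e0 + KK s n * (\<Sum>j\<le>m-1. c j * V s n ^ j) = 0" if n: "1 \<le> n" for n
  proof -
    note R1 = R_form[OF m1, of n "\<lambda>k. evp (f (m - k)) s"]
    note R2 = R_form[OF m1, of n "\<lambda>k. evp (Hf m (m - k)) s"]
    have "s ^ ((2*m-1)*n) * ((-1) ^ n * e0 + KK s n * (\<Sum>k=1..m. (-1) ^ (m-k) * d k / DD m k / s ^ (k-1) * V s n ^ (k-1)))
        = s ^ ((2*m-1)*n) * ((-1) ^ n * ((-1) ^ m * evp (f (m - 1)) s / DD m 1)
        + KK s n * (\<Sum>k=1..m. (-1) ^ (m-k) * evp (f (m - k)) s / DD m k / s ^ (k-1) * V s n ^ (k-1)))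
        - s ^ ((2*m-1)*n) * ((-1) ^ n * ((-1) ^ m * evp (Hf m (m - 1)) s / DD m 1)
        + KK s n * (\<Sum>k=1..m. (-1) ^ (m-k) * evp (Hf m (m - k)) s / DD m k / s ^ (k-1) * V s n ^ (k-1)))"
    proof -
      have sd: "(\<Sum>k=1..m. (-1) ^ (m-k) * d k / DD m k / s ^ (k-1) * V s n ^ (k-1))
          = (\<Sum>k=1..m. (-1) ^ (m-k) * evp (f (m - k)) s / DD m k / s ^ (k-1) * V s n ^ (k-1))
          - (\<Sum>k=1..m. (-1) ^ (m-k) * evp (Hf m (m - k)) s / DD m k / s ^ (k-1) * V s n ^ (k-1))"
        unfolding sum_subtractf[symmetric] d_def by (intro sum.cong refl) (simp add: algebra_simps diff_divide_distrib)
      have ed: "e0 = (-1) ^ m * evp (f (m - 1)) s / DD m 1 - (-1) ^ m * evp (Hf m (m - 1)) s / DD m 1"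
        by (simp add: e0_def d_def algebra_simps diff_divide_distrib)
      have gen: "E * (x * (a1 - a2) + K * (S1 - S2)) = E * (x * a1 + K * S1) - E * (x * a2 + K * S2)"
        for E x a1 a2 K S1 S2 :: real by (simp add: algebra_simps)
      show ?thesis unfolding sd ed by (rule gen)
    qed
    also have "\<dots> = Tsum (2*m-1) n (s^2) - Tsum (2*m-1) n (s^2)"
    proof -
      have a1: "s ^ ((2*m-1)*n) * ((-1) ^ n * ((-1) ^ m * evp (f (m - 1)) s / DD m 1)
        + KK s n * (\<Sum>k=1..m. (-1) ^ (m-k) * evp (f (m - k)) s / DD m k / s ^ (k-1) * V s n ^ (k-1)))
        = Tsum (2*m-1) n (s^2)" unfolding H[OF n] R1 ..
      have a2: "s ^ ((2*m-1)*n) * ((-1) ^ n * ((-1) ^ m * evp (Hf m (m - 1)) s / DD m 1)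
        + KK s n * (\<Sum>k=1..m. (-1) ^ (m-k) * evp (Hf m (m - k)) s / DD m k / s ^ (k-1) * V s n ^ (k-1)))
        = Tsum (2*m-1) n (s^2)" unfolding H_ident[OF m1] R2 ..
      show ?thesis unfolding a1 a2 ..
    qed
    finally have z: "s ^ ((2*m-1)*n) * ((-1) ^ n * e0 + KK s n * (\<Sum>k=1..m. (-1) ^ (m-k) * d k / DD m k / s ^ (k-1) * V s n ^ (k-1))) = 0"
      by simp
    have "(\<Sum>k=1..m. (-1) ^ (m-k) * d k / DD m k / s ^ (k-1) * V s n ^ (k-1)) = (\<Sum>j\<le>m-1. c j * V s n ^ j)"
      unfolding sum_shift1[OF m1] c_def atLeast0AtMost by simp
    then show ?thesis using z s_ne by simp
  qed
  have kk: "k - 1 \<le> m - 1" using k by simp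
  have "c (k - 1) = 0" by (rule sq_uniq[OF Z kk])
  moreover have "DD m k \<noteq> 0" using DD_pos[of m k] by simp
  ultimately show ?thesis using s_ne k by (simp add: c_def d_def)
qed

end

lemma Hfam_eq: "1 \<le> m \<Longrightarrow> Hfam m = Hf m"
  unfolding Hfam_def
proof (rule the_equality)
  assume m1: "1 \<le> m"
  show "(\<forall>j\<ge>m. Hf m j = 0) \<and> (\<forall>n\<ge>1. \<forall>q::real. 0 < q \<and> q \<noteq> 1 \<longrightarrow>
        Tsum (2*m-1) n q =
          (-1) ^ (m + n) * evp (Hf m (m - 1)) (sqrt q) * sqrt q ^ ((2*m-1)*n)
            / ((1 + sqrt q) ^ m * (\<Prod>i=0..m-1. 1 + sqrt q ^ (2*(m-i)-1)))
          + (1 - sqrt q ^ (2*n+1)) / (1 - sqrt q) *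
            (\<Sum>k=1..m. (- (q ^ n)) ^ (m - k) * evp (Hf m (m - k)) (sqrt q)
               * (qint q n * qint q (n+1)) ^ (k - 1)
               / ((1 + sqrt q) ^ (m - k + 1) * (\<Prod>i=0..m-k. 1 + sqrt q ^ (2*(m-i)-1)))))"
  proof (intro conjI allI impI)
    fix j assume "j \<ge> m" then show "Hf m j = 0" by (simp add: Hf_def)
  next
    fix n :: nat and q :: real assume "1 \<le> n" "0 < q \<and> q \<noteq> 1"
    then interpret sfix "sqrt q" using sfix_sqrt by auto
    show "Tsum (2*m-1) n q =
          (-1) ^ (m + n) * evp (Hf m (m - 1)) (sqrt q) * sqrt q ^ ((2*m-1)*n)
            / ((1 + sqrt q) ^ m * (\<Prod>i=0..m-1. 1 + sqrt q ^ (2*(m-i)-1)))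
          + (1 - sqrt q ^ (2*n+1)) / (1 - sqrt q) *
            (\<Sum>k=1..m. (- (q ^ n)) ^ (m - k) * evp (Hf m (m - k)) (sqrt q)
               * (qint q n * qint q (n+1)) ^ (k - 1)
               / ((1 + sqrt q) ^ (m - k + 1) * (\<Prod>i=0..m-k. 1 + sqrt q ^ (2*(m-i)-1))))"
      using H_ident[OF m1, of n] \<open>0 < q \<and> q \<noteq> 1\<close> by simp
  qed
next
  fix f assume m1: "1 \<le> m" and H: "(\<forall>j\<ge>m. f j = 0) \<and> (\<forall>n\<ge>1. \<forall>q::real. 0 < q \<and> q \<noteq> 1 \<longrightarrow>
        Tsum (2*m-1) n q =
          (-1) ^ (m + n) * evp (f (m - 1)) (sqrt q) * sqrt q ^ ((2*m-1)*n)
            / ((1 + sqrt q) ^ m * (\<Prod>i=0..m-1. 1 + sqrt q ^ (2*(m-i)-1)))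
          + (1 - sqrt q ^ (2*n+1)) / (1 - sqrt q) *
            (\<Sum>k=1..m. (- (q ^ n)) ^ (m - k) * evp (f (m - k)) (sqrt q)
               * (qint q n * qint q (n+1)) ^ (k - 1)
               / ((1 + sqrt q) ^ (m - k + 1) * (\<Prod>i=0..m-k. 1 + sqrt q ^ (2*(m-i)-1)))))"
  show "f = Hf m"
  proof
    fix j
    show "f j = Hf m j"
    proof (cases "j < m")
      case False then show ?thesis using H by (simp add: Hf_def)
    next
      case True
      show ?thesis
      proof (rule evp_inj[OF inf_q])
        fix t :: real assume t: "t \<in> {q. 0 < q \<and> q \<noteq> 1}"
        then interpret sfix t by unfold_locales auto
        have t2: "0 < t^2" "t^2 \<noteq> 1" using t s_ne by auto
        have "evp (f (m - (m - j))) t = evp (Hf m (m - (m - j))) t"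
        proof (rule H_uniq[OF m1])
          fix n :: nat assume n: "1 \<le> n"
          show "Tsum (2*m-1) n (t^2) =
            (-1) ^ (m + n) * evp (f (m - 1)) t * t ^ ((2*m-1)*n)
              / ((1 + t) ^ m * (\<Prod>i=0..m-1. 1 + t ^ (2*(m-i)-1)))
            + (1 - t ^ (2*n+1)) / (1 - t) *
              (\<Sum>k=1..m. (- ((t^2) ^ n)) ^ (m - k) * evp (f (m - k)) t
                 * (qint (t^2) n * qint (t^2) (n+1)) ^ (k - 1)
                 / ((1 + t) ^ (m - k + 1) * (\<Prod>i=0..m-k. 1 + t ^ (2*(m-i)-1))))"
            using H n t2 sqrt_sq_pos[of t] t by auto
        qed (use True in auto)
        then show "evp (f j) t = evp (Hf m j) t" using True by simp
      qed
    qed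
  qed
qed

lemma thm_H:
  assumes "0 < q" "q \<noteq> 1"
  shows "inverse_on 1 n
      (\<lambda>k m. dpol (int k) (int m) q)
      (\<lambda>k m. if m \<le> k then (-1) ^ (k - m) * evp (Hpol k (k - m)) q
                 / ((1 + q) ^ (k - m + 1) * (\<Prod>i=0..k-m. 1 + q ^ (2*k - 2*i - 1)))
             else 0)"
proof -
  have A: "(\<lambda>k m. dpol (int k) (int m) q) = AD q" by (simp add: AD_def[abs_def])
  show ?thesis unfolding A
  proof (rule inverse_onI'[OF lowtri_AD[OF assms(1)]])
    fix k m :: nat assume k: "k \<in> {1..n}" and m: "m \<in> {1..n}"
    show "(if m \<le> k then (-1) ^ (k - m) * evp (Hpol k (k - m)) q
                 / ((1 + q) ^ (k - m + 1) * (\<Prod>i=0..k-m. 1 + q ^ (2*k - 2*i - 1))) else 0)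
        = Bm (AD q) k m"
    proof (cases "m \<le> k")
      case True
      have km: "1 \<le> m" "m \<le> k" "1 \<le> k" using k m True by auto
      have sg: "(-1::real) ^ (k - m) * (-1) ^ (k - m) = 1" by (simp flip: power_add)
      have P: "(\<Prod>i=0..k-m. 1 + q ^ (2*k - 2*i - 1)) = (\<Prod>i=0..k-m. 1 + q ^ (2*(k-i) - 1))"
        by (intro prod.cong refl) (simp add: diff_mult_distrib2)
      have B: "Bm (AD q) k m = trinv (AD q) k m / ((1 + q) ^ (k - m + 1) * (\<Prod>i=0..k-m. 1 + q ^ (2*(k-i) - 1)))"
        using True by (simp add: Bm_def Dg_AD[OF km(1,2)])
      have "(-1) ^ (k - m) * evp (Hpol k (k - m)) q / ((1 + q) ^ (k - m + 1) * (\<Prod>i=0..k-m. 1 + q ^ (2*(k-i) - 1)))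
          = ((-1) ^ (k - m) * (-1) ^ (k - m)) * trinv (AD q) k m / ((1 + q) ^ (k - m + 1) * (\<Prod>i=0..k-m. 1 + q ^ (2*(k-i) - 1)))"
        unfolding Hpol_def Hfam_eq[OF km(3)] evp_Hf[OF km(1,2)] by (simp add: divide_inverse mult_ac)
      then show ?thesis using True unfolding P sg B by simp
    qed (simp add: Bm_def)
  qed
qed

theorem theorem2p3:
  fixes n :: nat and q :: real
  assumes "n \<ge> 1" and "0 < q" and "q \<noteq> 1"
  shows
   "inverse_on 0 n
      (\<lambda>k m. hsym (2 * int m - int k) (int k - int m + 1) q)
      (\<lambda>k m. if m \<le> k then (-1) ^ (k - m) * qfact q m / qfact q (k+1) * evp (Ppol k (k - m)) q
             else 0)
  \<and> inverse_on 1 n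
      (\<lambda>k m. cpol (int k) (int m) q)
      (\<lambda>k m. if m \<le> k then (-1) ^ (k - m) * (1 - q) ^ (k - m + 1) * evp (Qpol k (k - m)) q
                 / (\<Prod>i=0..k-m. 1 - q ^ (2*k - 2*i + 1))
             else 0)
  \<and> inverse_on 1 n
      (\<lambda>k m. gpol (int k) (int m) q)
      (\<lambda>k m. if m \<le> k then (-1) ^ (k - m) * evp (Gpol k (k - m)) q
                 / (\<Prod>i=0..k-m. 1 + q ^ (k - i))
             else 0)
  \<and> inverse_on 1 n
      (\<lambda>k m. dpol (int k) (int m) q)
      (\<lambda>k m. if m \<le> k then (-1) ^ (k - m) * evp (Hpol k (k - m)) q
                 / ((1 + q) ^ (k - m + 1) * (\<Prod>i=0..k-m. 1 + q ^ (2*k - 2*i - 1)))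
             else 0)"
  using thm_P[OF assms(2,3)] thm_Q[OF assms(2,3)] thm_G[OF assms(2,3)] thm_H[OF assms(2,3)] by blast


end
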